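(* Let $R$ be an injective quasinormal operator on a Hilbert space $\tilde{\mathcal{H}}$, and let $R=N\oplus T\in\mathcal{B}(\mathcal{E}\oplus\mathcal{H})$ be its canonical decomposition into a normal operator $N\in\mathcal{B}(\mathcal{E})$ and a pure quasinormal operator $T\in\mathcal{B}(\mathcal{H})$. Let $\lambda\in\sigma_{ext}(R)$. Then \[E_{ext}(R,\lambda)=\left\{\begin{bmatrix}U&VU_T\\0&W\end{bmatrix}: U\in E_{ext}(N,\lambda),\ V\in E_{int}(N,A_T\otimes S,\lambda),\ W\in E_{ext}(T,\lambda)\right\},\] and $E_{int}(N,A_T\otimes S,\lambda)$ consists of the bounded operators $V=[V_0,V_1,\dots]\in\mathcal{B}(\bigoplus_{k\ge0}\mathfrak{L}_T,\mathcal{E})$ (row matrix form) such that $V_0\in\mathcal{A}_{|\lambda|}(N,A_T)$ and, for every $n\ge1$, $V_n$ is the unique bounded extension to $\mathfrak{L}_T$ of the operator $\mathrm{Im}A_T^n\to\mathcal{E}$, $A_T^nx\mapsto\lambda^{-n}N^nV_0x$.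
   Context: Quasinormal: $T|T|=|T|T$ with $|T|=(T^*T)^{1/2}$; pure: no nonzero reducing subspace on which the operator is normal. Every quasinormal operator splits (canonically) as an orthogonal direct sum of a normal part and a pure quasinormal part. For pure quasinormal $T$ with polar decomposition $T=V_T|T|$: $\mathfrak{L}_T=\mathcal{H}\ominus V_T\mathcal{H}$, $A_T=|T|\big|_{\mathfrak{L}_T}$ (injective positive), and $U_T:\mathcal{H}\to\mathfrak{L}_T\otimes H^2\cong\bigoplus_{k\ge0}\mathfrak{L}_T$ is a unitary with $A_T\otimes S=U_TTU_T^*$, $S$ the unilateral shift on $H^2$. $E_{ext}(T,\lambda)=\{X:TX=\lambda XT\}$, $E_{int}(A,B,\lambda)=\{X:AX=\lambda XB\}$, $\sigma_{ext}(R)$ is the set of $\lambda$ with $E_{ext}(R,\lambda)\ne\{0\}$. For $r>0$, $\mathcal{A}_r(N,A)=\{L\in\mathcal{B}(\mathfrak{L}_T,\mathcal{E}):\exists c\ge0,\ \|r^{-n}N^nLx\|\le c\|A^nx\|\ \forall x,\ \forall n\in\mathbb{N}\}$. *)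

theory Defs
  imports "HOL-Analysis.Analysis"
begin

class complex_vector = real_vector +
  fixes scaleC :: "complex \<Rightarrow> 'a \<Rightarrow> 'a" (infixr "*\<^sub>C" 75)
  assumes scaleR_scaleC: "scaleR r x = scaleC (complex_of_real r) x"
    and scaleC_add_right: "scaleC a (x + y) = scaleC a x + scaleC a y"
    and scaleC_add_left: "scaleC (a + b) x = scaleC a x + scaleC b x"
    and scaleC_scaleC: "scaleC a (scaleC b x) = scaleC (a * b) x"
    and scaleC_one: "scaleC 1 x = x"

class complex_inner = complex_vector + real_normed_vector +
  fixes cinner :: "'a \<Rightarrow> 'a \<Rightarrow> complex"
  assumes cinner_commute: "cinner x y = cnj (cinner y x)"
    and cinner_add_left: "cinner (x + y) z = cinner x z + cinner y z"
    and cinner_scaleC_left: "cinner (scaleC c x) y = cnj c * cinner x y"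
    and cinner_real: "Im (cinner x x) = 0"
    and cinner_ge_zero: "0 \<le> Re (cinner x x)"
    and cinner_eq_zero_iff: "cinner x x = 0 \<longleftrightarrow> x = 0"
    and norm_eq_sqrt_cinner: "norm x = sqrt (Re (cinner x x))"

class chilbert_space = complex_inner + complete_space


text \<open>Sanity check: the class is inhabited (the complex numbers form a complex Hilbert space).\<close>
instantiation complex :: complex_vector
begin
definition scaleC_complex_def: "scaleC a (x::complex) = a * x"
instance by standard (auto simp: scaleC_complex_def scaleR_conv_of_real algebra_simps)
end

instantiation complex :: complex_inner
begin
definition cinner_complex_def: "cinner (x::complex) y = cnj x * y"
instance
proof
  fix x y z :: complex and c :: complex
  show "cinner x y = cnj (cinner y x)" by (simp add: cinner_complex_def mult.commute)
  show "cinner (x + y) z = cinner x z + cinner y z" by (simp add: cinner_complex_def algebra_simps)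
  show "cinner (c *\<^sub>C x) y = cnj c * cinner x y" by (simp add: cinner_complex_def scaleC_complex_def)
  show "Im (cinner x x) = 0" by (simp add: cinner_complex_def)
  show "0 \<le> Re (cinner x x)" by (simp add: cinner_complex_def)
  show "(cinner x x = 0) = (x = 0)" by (simp add: cinner_complex_def)
  show "norm x = sqrt (Re (cinner x x))"
    by (simp add: cinner_complex_def cmod_def power2_eq_square)
qed
end

instance complex :: chilbert_space ..

definition closed_subspace :: "'a::chilbert_space set \<Rightarrow> bool" where
  "closed_subspace M \<longleftrightarrow> 0 \<in> M \<and> (\<forall>x\<in>M. \<forall>y\<in>M. x + y \<in> M)
     \<and> (\<forall>c. \<forall>x\<in>M. c *\<^sub>C x \<in> M) \<and> closed M"

definition orth_compl :: "'a::chilbert_space set \<Rightarrow> 'a set" where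
  "orth_compl M = {x. \<forall>y\<in>M. cinner x y = 0}"

definition lin_bdd_on :: "'a::chilbert_space set \<Rightarrow> 'b::chilbert_space set \<Rightarrow> ('a \<Rightarrow> 'b) \<Rightarrow> bool" where
  "lin_bdd_on D C f \<longleftrightarrow> (\<forall>x\<in>D. f x \<in> C)
     \<and> (\<forall>x\<in>D. \<forall>y\<in>D. f (x + y) = f x + f y)
     \<and> (\<forall>c. \<forall>x\<in>D. f (c *\<^sub>C x) = c *\<^sub>C f x)
     \<and> (\<exists>K. \<forall>x\<in>D. norm (f x) \<le> K * norm x)"

definition op_on :: "'a::chilbert_space set \<Rightarrow> ('a \<Rightarrow> 'a) \<Rightarrow> bool" where
  "op_on M f \<longleftrightarrow> lin_bdd_on M M f"

definition normal_on :: "'a::chilbert_space set \<Rightarrow> ('a \<Rightarrow> 'a) \<Rightarrow> bool" where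
  "normal_on M R \<longleftrightarrow> op_on M R \<and>
     (\<exists>S. op_on M S \<and> (\<forall>x\<in>M. \<forall>y\<in>M. cinner (R x) y = cinner x (S y))
          \<and> (\<forall>x\<in>M. R (S x) = S (R x)))"

text \<open>P is the modulus |T| = (T*T)^(1/2) of T in B(M): P is positive and P^2 = T*T,
the latter written as equality of the sesquilinear forms.\<close>
definition modulus_on :: "'a::chilbert_space set \<Rightarrow> ('a \<Rightarrow> 'a) \<Rightarrow> ('a \<Rightarrow> 'a) \<Rightarrow> bool" where
  "modulus_on M T P \<longleftrightarrow> op_on M P
     \<and> (\<forall>x\<in>M. \<forall>y\<in>M. cinner (P x) y = cinner x (P y))
     \<and> (\<forall>x\<in>M. 0 \<le> Re (cinner (P x) x))
     \<and> (\<forall>x\<in>M. \<forall>y\<in>M. cinner (P x) (P y) = cinner (T x) (T y))"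

definition quasinormal_on :: "'a::chilbert_space set \<Rightarrow> ('a \<Rightarrow> 'a) \<Rightarrow> bool" where
  "quasinormal_on M T \<longleftrightarrow> op_on M T \<and>
     (\<exists>P. modulus_on M T P \<and> (\<forall>x\<in>M. T (P x) = P (T x)))"

definition reduces :: "'a::chilbert_space set \<Rightarrow> ('a \<Rightarrow> 'a) \<Rightarrow> 'a set \<Rightarrow> bool" where
  "reduces M R M' \<longleftrightarrow> closed_subspace M' \<and> M' \<subseteq> M
     \<and> (\<forall>x\<in>M'. R x \<in> M') \<and> (\<forall>x\<in>M \<inter> orth_compl M'. R x \<in> M \<inter> orth_compl M')"

definition pure_on :: "'a::chilbert_space set \<Rightarrow> ('a \<Rightarrow> 'a) \<Rightarrow> bool" where
  "pure_on M R \<longleftrightarrow> \<not> (\<exists>M'. reduces M R M' \<and> M' \<noteq> {0} \<and> normal_on M' R)"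

text \<open>Canonical decomposition R = N \<oplus> T on E \<oplus> H (N = R on E normal, T = R on H pure).\<close>
definition canonical_decomp :: "('a::chilbert_space \<Rightarrow> 'a) \<Rightarrow> 'a set \<Rightarrow> 'a set \<Rightarrow> bool" where
  "canonical_decomp R E H \<longleftrightarrow> reduces UNIV R E \<and> H = orth_compl E
     \<and> normal_on E R \<and> pure_on H R"

definition polar_part_on :: "'a::chilbert_space set \<Rightarrow> ('a \<Rightarrow> 'a) \<Rightarrow> ('a \<Rightarrow> 'a) \<Rightarrow> ('a \<Rightarrow> 'a) \<Rightarrow> bool" where
  "polar_part_on M T P V \<longleftrightarrow> op_on M V \<and> (\<forall>x\<in>M. T x = V (P x))
     \<and> {x\<in>M. V x = 0} = {x\<in>M. P x = 0}"

definition Eext_on :: "'a::chilbert_space set \<Rightarrow> ('a \<Rightarrow> 'a) \<Rightarrow> complex \<Rightarrow> ('a \<Rightarrow> 'a) set" where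
  "Eext_on M R l = {X. op_on M X \<and> (\<forall>x\<in>M. R (X x) = l *\<^sub>C X (R x))}"

definition sigma_ext :: "('a::chilbert_space \<Rightarrow> 'a) \<Rightarrow> complex set" where
  "sigma_ext R = {l. Eext_on UNIV R l \<noteq> {\<lambda>x. 0}}"

section \<open>The space L \<otimes> H^2 = \<oplus>_{k\<ge>0} L (square-summable sequences in L)\<close>

definition l2seq :: "'a::chilbert_space set \<Rightarrow> (nat \<Rightarrow> 'a) set" where
  "l2seq L = {s. (\<forall>k. s k \<in> L) \<and> summable (\<lambda>k. (norm (s k))\<^sup>2)}"

definition l2norm :: "(nat \<Rightarrow> 'a::chilbert_space) \<Rightarrow> real" where
  "l2norm s = sqrt (\<Sum>k. (norm (s k))\<^sup>2)"

definition seq_add :: "(nat \<Rightarrow> 'a::chilbert_space) \<Rightarrow> (nat \<Rightarrow> 'a) \<Rightarrow> nat \<Rightarrow> 'a" where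
  "seq_add s t = (\<lambda>k. s k + t k)"

definition seq_scale :: "complex \<Rightarrow> (nat \<Rightarrow> 'a::chilbert_space) \<Rightarrow> nat \<Rightarrow> 'a" where
  "seq_scale c s = (\<lambda>k. c *\<^sub>C s k)"

definition bop_l2 :: "'a::chilbert_space set \<Rightarrow> 'a set \<Rightarrow> ((nat \<Rightarrow> 'a) \<Rightarrow> 'a) \<Rightarrow> bool" where
  "bop_l2 L C V \<longleftrightarrow> (\<forall>s\<in>l2seq L. V s \<in> C)
     \<and> (\<forall>s\<in>l2seq L. \<forall>t\<in>l2seq L. V (seq_add s t) = V s + V t)
     \<and> (\<forall>c. \<forall>s\<in>l2seq L. V (seq_scale c s) = c *\<^sub>C V s)
     \<and> (\<exists>K. \<forall>s\<in>l2seq L. norm (V s) \<le> K * l2norm s)"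

definition unitary_l2 :: "'a::chilbert_space set \<Rightarrow> 'a set \<Rightarrow> ('a \<Rightarrow> nat \<Rightarrow> 'a) \<Rightarrow> bool" where
  "unitary_l2 H L U \<longleftrightarrow> (\<forall>h\<in>H. U h \<in> l2seq L)
     \<and> (\<forall>x\<in>H. \<forall>y\<in>H. U (x + y) = seq_add (U x) (U y))
     \<and> (\<forall>c. \<forall>x\<in>H. U (c *\<^sub>C x) = seq_scale c (U x))
     \<and> (\<forall>h\<in>H. l2norm (U h) = norm h)
     \<and> (\<forall>s\<in>l2seq L. \<exists>h\<in>H. U h = s)"

text \<open>The operator A \<otimes> S (S the unilateral shift): (x_0, x_1, ...) \<mapsto> (0, A x_0, A x_1, ...).\<close>
definition tensorS :: "('a::chilbert_space \<Rightarrow> 'a) \<Rightarrow> (nat \<Rightarrow> 'a) \<Rightarrow> nat \<Rightarrow> 'a" where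
  "tensorS A s = (\<lambda>k. case k of 0 \<Rightarrow> 0 | Suc j \<Rightarrow> A (s j))"

definition Eint_l2 :: "'a::chilbert_space set \<Rightarrow> 'a set \<Rightarrow> ('a \<Rightarrow> 'a) \<Rightarrow> ('a \<Rightarrow> 'a) \<Rightarrow> complex
     \<Rightarrow> ((nat \<Rightarrow> 'a) \<Rightarrow> 'a) set" where
  "Eint_l2 E L N A l = {V. bop_l2 L E V \<and> (\<forall>s\<in>l2seq L. N (V s) = l *\<^sub>C V (tensorS A s))}"

text \<open>The n-th entry V_n of the row matrix [V_0, V_1, ...]: V_n x = V (0,...,0,x,0,...).\<close>
definition row_entry :: "((nat \<Rightarrow> 'a::chilbert_space) \<Rightarrow> 'a) \<Rightarrow> nat \<Rightarrow> 'a \<Rightarrow> 'a" where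
  "row_entry V n x = V (\<lambda>k. if k = n then x else 0)"

definition A_class :: "real \<Rightarrow> 'a set \<Rightarrow> 'a set \<Rightarrow> ('a::chilbert_space \<Rightarrow> 'a) \<Rightarrow> ('a \<Rightarrow> 'a)
     \<Rightarrow> ('a \<Rightarrow> 'a) set" where
  "A_class r L E N A = {F. lin_bdd_on L E F \<and> (\<exists>c\<ge>0. \<forall>x\<in>L. \<forall>n::nat.
      norm (((1 / r) ^ n) *\<^sub>R (N ^^ n) (F x)) \<le> c * norm ((A ^^ n) x))}"

end

theory Submission
  imports Defs
begin


lemma cinner_add_right: "cinner x (y + z) = cinner x y + cinner x (z::'a::complex_inner)"
proof -
  have "cinner x (y + z) = cnj (cinner (y + z) x)" by (rule cinner_commute)
  also have "\<dots> = cnj (cinner y x) + cnj (cinner z x)" by (simp add: cinner_add_left)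
  also have "\<dots> = cinner x y + cinner x z"
    using cinner_commute[of x y] cinner_commute[of x z] by simp
  finally show ?thesis .
qed

lemma cinner_scaleC_right: "cinner x (c *\<^sub>C y) = c * cinner x (y::'a::complex_inner)"
proof -
  have "cinner x (c *\<^sub>C y) = cnj (cinner (c *\<^sub>C y) x)" by (rule cinner_commute)
  also have "\<dots> = c * cnj (cinner y x)" by (simp add: cinner_scaleC_left)
  also have "\<dots> = c * cinner x y"
    using cinner_commute[of x y] by simp
  finally show ?thesis .
qed

lemma scaleC_zero_left[simp]: "0 *\<^sub>C (x::'a::complex_vector) = 0"
  using scaleR_scaleC[of 0 x] by simp

lemma scaleC_zero_right[simp]: "c *\<^sub>C (0::'a::complex_vector) = 0"
proof -
  have "c *\<^sub>C (0::'a) = c *\<^sub>C (0 + 0)" by simp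
  also have "\<dots> = c *\<^sub>C 0 + c *\<^sub>C 0" by (rule scaleC_add_right)
  finally show ?thesis by simp
qed

lemma uminus_scaleC: "- (x::'a::complex_vector) = (-1) *\<^sub>C x"
  using scaleR_scaleC[of "-1" x] by simp

lemma scaleC_minus_right: "c *\<^sub>C (- x) = - (c *\<^sub>C (x::'a::complex_vector))"
proof -
  have "c *\<^sub>C (- x) = c *\<^sub>C ((-1) *\<^sub>C x)" by (simp only: uminus_scaleC[of x])
  also have "\<dots> = (-1) *\<^sub>C (c *\<^sub>C x)" by (simp only: scaleC_scaleC mult.commute)
  also have "\<dots> = - (c *\<^sub>C x)" by (simp only: uminus_scaleC[of "c *\<^sub>C x"])
  finally show ?thesis .
qed

lemma scaleC_diff_right: "c *\<^sub>C (x - y) = c *\<^sub>C x - c *\<^sub>C (y::'a::complex_vector)"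
  using scaleC_add_right[of c x "-y"] scaleC_minus_right[of c y] by simp

lemma scaleC_minus_left: "(- c) *\<^sub>C x = - (c *\<^sub>C (x::'a::complex_vector))"
proof -
  have "(- c) *\<^sub>C x = ((-1) * c) *\<^sub>C x" by simp
  also have "\<dots> = (-1) *\<^sub>C (c *\<^sub>C x)" by (simp only: scaleC_scaleC)
  also have "\<dots> = - (c *\<^sub>C x)" by (simp only: uminus_scaleC[of "c *\<^sub>C x"])
  finally show ?thesis .
qed

lemma scaleC_diff_left: "(c - d) *\<^sub>C x = c *\<^sub>C x - d *\<^sub>C (x::'a::complex_vector)"
  using scaleC_add_left[of c "-d" x] scaleC_minus_left[of d x] by simp

lemma cinner_zero_left[simp]: "cinner 0 (y::'a::complex_inner) = 0"
proof -
  have "cinner 0 y = cinner (0 + 0) y" by simp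
  also have "\<dots> = cinner 0 y + cinner 0 y" by (rule cinner_add_left)
  finally show ?thesis by simp
qed

lemma cinner_zero_right[simp]: "cinner (y::'a::complex_inner) 0 = 0"
  using cinner_commute[of y 0] by simp

lemma cinner_minus_left: "cinner (- x) (y::'a::complex_inner) = - cinner x y"
  by (simp add: uminus_scaleC[of x] cinner_scaleC_left)

lemma cinner_minus_right: "cinner x (- y::'a::complex_inner) = - cinner x y"
  by (simp add: uminus_scaleC[of y] cinner_scaleC_right)

lemma cinner_diff_left: "cinner (x - z) (y::'a::complex_inner) = cinner x y - cinner z y"
  using cinner_add_left[of x "-z" y] cinner_minus_left[of z y] by simp

lemma cinner_diff_right: "cinner x (y - z::'a::complex_inner) = cinner x y - cinner x z"
  using cinner_add_right[of x y "-z"] cinner_minus_right[of x z] by simp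

lemma norm_sq_cinner: "(norm x)^2 = Re (cinner x (x::'a::complex_inner))"
  by (simp add: norm_eq_sqrt_cinner cinner_ge_zero)

lemma cinner_self: "cinner x (x::'a::complex_inner) = complex_of_real ((norm x)^2)"
  by (simp add: norm_sq_cinner complex_eq_iff cinner_real)

lemma norm_scaleC: "norm (c *\<^sub>C (x::'a::complex_inner)) = cmod c * norm x"
proof -
  have "(norm (c *\<^sub>C x))^2 = Re (cnj c * c * cinner x x)"
    by (simp add: norm_sq_cinner cinner_scaleC_left cinner_scaleC_right mult.assoc cinner_real)
  also have "cnj c * c = complex_of_real ((cmod c)^2)"
    using cmod_power2[of c] by (simp add: complex_eq_iff power2_eq_square)
  also have "Re (complex_of_real ((cmod c)\<^sup>2) * cinner x x) = (cmod c)^2 * (norm x)^2"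
    by (simp add: cinner_self)
  finally have "(norm (c *\<^sub>C x))^2 = (cmod c * norm x)^2" by (simp add: power_mult_distrib)
  thus ?thesis by (simp add: power2_eq_iff_nonneg)
qed

definition rin :: "'a::complex_inner \<Rightarrow> 'a \<Rightarrow> real" where
  "rin x y = Re (cinner x y)"

lemma rin_sym: "rin x y = rin y x"
  unfolding rin_def by (subst cinner_commute) simp

lemma norm_add_sq: "(norm (x + y))^2 = (norm x)^2 + 2 * rin x y + (norm (y::'a::complex_inner))^2"
proof -
  have s: "Re (cinner y x) = rin x y" using rin_sym[of y x] by (simp add: rin_def)
  show ?thesis unfolding norm_sq_cinner
    by (simp add: cinner_add_left cinner_add_right s) (simp add: rin_def)
qed

lemma norm_diff_sq: "(norm (x - y))^2 = (norm x)^2 - 2 * rin x y + (norm (y::'a::complex_inner))^2"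
proof -
  have s: "Re (cinner y x) = rin x y" using rin_sym[of y x] by (simp add: rin_def)
  show ?thesis unfolding norm_sq_cinner
    by (simp add: cinner_diff_left cinner_diff_right s) (simp add: rin_def)
qed

lemma parallelogram: "(norm (x + y))^2 + (norm (x - y))^2 = 2*(norm x)^2 + 2*(norm (y::'a::complex_inner))^2"
  by (simp add: norm_add_sq norm_diff_sq)

lemma rin_polar: "rin x y = ((norm (x + y))^2 - (norm (x - y))^2) / 4"
  by (simp add: norm_add_sq norm_diff_sq)


definition subsp :: "'a::complex_vector set \<Rightarrow> bool" where
  "subsp M \<longleftrightarrow> 0 \<in> M \<and> (\<forall>x\<in>M. \<forall>y\<in>M. x + y \<in> M) \<and> (\<forall>c. \<forall>x\<in>M. c *\<^sub>C x \<in> M)"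

lemma closed_subspace_iff: "closed_subspace M \<longleftrightarrow> subsp M \<and> closed M"
  unfolding closed_subspace_def subsp_def by auto

lemma subsp_0: "subsp M \<Longrightarrow> 0 \<in> M" by (simp add: subsp_def)
lemma subsp_add: "subsp M \<Longrightarrow> x \<in> M \<Longrightarrow> y \<in> M \<Longrightarrow> x + y \<in> M" by (simp add: subsp_def)
lemma subsp_scaleC: "subsp M \<Longrightarrow> x \<in> M \<Longrightarrow> c *\<^sub>C x \<in> M" by (simp add: subsp_def)
lemma subsp_uminus: "subsp M \<Longrightarrow> x \<in> M \<Longrightarrow> - x \<in> M"
  by (metis subsp_scaleC uminus_scaleC)
lemma subsp_diff: "subsp M \<Longrightarrow> x \<in> M \<Longrightarrow> y \<in> M \<Longrightarrow> x - y \<in> M"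
  by (metis diff_conv_add_uminus subsp_add subsp_uminus)
lemma subsp_scaleR: "subsp M \<Longrightarrow> x \<in> M \<Longrightarrow> r *\<^sub>R x \<in> M"
  by (metis scaleR_scaleC subsp_scaleC)

lemma rin_scaleR_right: "rin z (t *\<^sub>R w) = t * rin z w"
  by (simp add: rin_def scaleR_scaleC cinner_scaleC_right)

lemma min_rin:
  fixes z w :: "'a::complex_inner"
  assumes "\<forall>t::real. (norm z)^2 \<le> (norm (z - t *\<^sub>R w))^2"
  shows "rin z w = 0"
proof -
  define a where "a = rin z w"
  define b where "b = (norm w)^2"
  have b0: "b \<ge> 0" by (simp add: b_def)
  have key: "0 \<le> - 2 * t * a + t^2 * b" for t
    using assms[rule_format, of t]
    by (simp add: norm_diff_sq rin_scaleR_right a_def b_def power_mult_distrib)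
  have "0 \<le> - 2 * (a/(b+1)) * a + (a/(b+1))^2 * b" using key .
  hence "0 \<le> (- 2 * (a/(b+1)) * a + (a/(b+1))^2 * b) * (b+1)^2"
    using b0 by simp
  moreover have "(- 2 * (a/(b+1)) * a + (a/(b+1))^2 * b) * (b+1)^2 = -(a^2 * (b + 2))"
  proof -
    have bp: "b + 1 \<noteq> 0" "1 + b \<noteq> 0" using b0 by auto
    have gen: "(- 2 * t * a + t^2 * b) * c^2 = -2*a*(t*c)*c + (t*c)^2*b" for t c :: real
      by (simp add: power2_eq_square algebra_simps)
    have tc: "(a/(b+1)) * (b+1) = a" using bp by simp
    show ?thesis unfolding gen[of "a/(b+1)" "b+1"] tc by (simp add: power2_eq_square algebra_simps)
  qed
  ultimately have "a^2 * (b+2) \<le> 0" by simp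
  hence "a^2 \<le> 0" using b0
    by (metis add_nonneg_pos mult_le_0_iff not_less zero_less_numeral zero_le_power2)
  thus ?thesis unfolding a_def by simp
qed

lemma min_orth:
  fixes z :: "'a::complex_inner"
  assumes M: "subsp M" and min: "\<forall>w\<in>M. norm z \<le> norm (z - w)" and y: "y \<in> M"
  shows "cinner z y = 0"
proof -
  have mm: "\<forall>t::real. (norm z)^2 \<le> (norm (z - t *\<^sub>R w))^2" if "w \<in> M" for w
    using min subsp_scaleR[OF M that] by (simp add: power_mono)
  have "rin z y = 0" by (rule min_rin[OF mm[OF y]])
  moreover have "rin z (\<i> *\<^sub>C y) = 0" by (rule min_rin[OF mm[OF subsp_scaleC[OF M y]]])
  ultimately show ?thesis
    by (simp add: rin_def cinner_scaleC_right complex_eq_iff)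
qed

lemma orth_complI: "(\<And>y. y \<in> M \<Longrightarrow> cinner x y = 0) \<Longrightarrow> x \<in> orth_compl M"
  by (simp add: orth_compl_def)

lemma orth_complD: "x \<in> orth_compl M \<Longrightarrow> y \<in> M \<Longrightarrow> cinner x y = 0"
  by (simp add: orth_compl_def)

lemma orth_complD': "x \<in> orth_compl M \<Longrightarrow> y \<in> M \<Longrightarrow> cinner y x = 0"
  by (metis cinner_commute complex_cnj_zero orth_complD)

lemma proj_exists:
  fixes x :: "'a::chilbert_space"
  assumes cs: "closed_subspace M"
  shows "\<exists>m\<in>M. x - m \<in> orth_compl M"
proof -
  have M: "subsp M" and clM: "closed M" using cs by (auto simp: closed_subspace_iff)
  define D where "D = (\<lambda>m. norm (x - m)) ` M"
  define d where "d = Inf D"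
  have Dne: "D \<noteq> {}" using subsp_0[OF M] by (auto simp: D_def)
  have bdd: "bdd_below D" unfolding D_def by (rule bdd_belowI[of _ 0]) auto
  have dle: "d \<le> norm (x - m)" if "m \<in> M" for m
    unfolding d_def using bdd that by (auto simp: D_def intro: cInf_lower)
  have d0: "0 \<le> d" unfolding d_def by (rule cInf_greatest[OF Dne]) (auto simp: D_def)
  have "\<exists>m\<in>M. (norm (x - m))^2 < d^2 + 1/(real j + 1)" for j :: nat
  proof -
    have "d < sqrt (d^2 + 1/(real j + 1))"
      by (intro real_less_rsqrt) simp
    then obtain y where "y \<in> D" "y < sqrt (d^2 + 1/(real j + 1))"
      using cInf_less_iff[OF Dne bdd] unfolding d_def by blast
    then obtain m where m: "m \<in> M" "norm (x - m) < sqrt (d^2 + 1/(real j + 1))"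
      by (auto simp: D_def)
    hence "(norm (x - m))^2 < (sqrt (d^2 + 1/(real j + 1)))^2"
      by (intro power_strict_mono) auto
    hence "(norm (x - m))^2 < d^2 + 1/(real j + 1)"
      by (simp add: add_nonneg_nonneg)
    thus ?thesis using m by blast
  qed
  then obtain ms where ms: "\<And>j. ms j \<in> M" "\<And>j. (norm (x - ms j))^2 < d^2 + 1/(real j + 1)"
    by metis
  have par: "(norm (ms i - ms j))^2 \<le> 2/(real i + 1) + 2/(real j + 1)" for i j
  proof -
    define mid where "mid = (1/2::real) *\<^sub>R (ms i + ms j)"
    have "mid \<in> M" unfolding mid_def by (intro subsp_scaleR subsp_add M ms)
    hence "d \<le> norm (x - mid)" by (rule dle)
    hence "4 * d^2 \<le> (norm ((x - ms i) + (x - ms j)))^2"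
    proof -
      have "(x - ms i) + (x - ms j) = 2 *\<^sub>R (x - mid)" unfolding mid_def
        by (simp add: algebra_simps scaleR_2)
      hence "norm ((x - ms i) + (x - ms j)) = 2 * norm (x - mid)" by simp
      moreover have "d^2 \<le> (norm (x - mid))^2" using \<open>d \<le> norm (x - mid)\<close> d0 by (simp add: power_mono)
      ultimately show ?thesis by (simp add: power_mult_distrib)
    qed
    moreover have "(norm ((x - ms i) - (x - ms j)))^2 = (norm (ms i - ms j))^2"
      by (simp add: norm_minus_commute)
    ultimately show ?thesis
      using parallelogram[of "x - ms i" "x - ms j"] ms(2)[of i] ms(2)[of j] by linarith
  qed
  have "Cauchy ms"
  proof (rule metric_CauchyI)
    fix e :: real assume e: "e > 0"
    obtain N :: nat where N: "4 / e^2 < real N" using reals_Archimedean2 by blast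
    have "e^2 > 0" using e by simp
    show "\<exists>M. \<forall>m\<ge>M. \<forall>n\<ge>M. dist (ms m) (ms n) < e"
    proof (intro exI allI impI)
      fix i j assume ij: "i \<ge> N" "j \<ge> N"
      have "2/(real i + 1) \<le> 2/(real N + 1)" using ij by (simp add: frac_le)
      moreover have "2/(real j + 1) \<le> 2/(real N + 1)" using ij by (simp add: frac_le)
      moreover have "4/(real N + 1) < e^2"
      proof -
        have "4 < e^2 * real N" using N \<open>e^2 > 0\<close> by (simp add: divide_less_eq mult.commute)
        moreover have "e^2 * (real N + 1) = e^2 * real N + e^2" by (simp add: algebra_simps)
        ultimately have "4 < e^2 * (real N + 1)" using \<open>e^2 > 0\<close> by linarith
        thus ?thesis by (simp add: divide_less_eq mult.commute)
      qed
      ultimately have "(norm (ms i - ms j))^2 < e^2" using par[of i j] by linarith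
      thus "dist (ms i) (ms j) < e" using e by (simp add: dist_norm power_less_imp_less_base)
    qed
  qed
  then obtain m where lim: "ms \<longlonglongrightarrow> m" using convergent_def Cauchy_convergent by blast
  have mM: "m \<in> M" using clM ms(1) lim closed_sequentially by blast
  have "(\<lambda>j. (norm (x - ms j))^2) \<longlonglongrightarrow> (norm (x - m))^2"
    by (rule tendsto_power[OF tendsto_norm[OF tendsto_diff[OF tendsto_const lim]]])
  moreover have "(\<lambda>j. d^2 + 1/(real j + 1)) \<longlonglongrightarrow> d^2 + 0"
  proof -
    have e: "(\<lambda>j. 1/(real j + 1)) = (\<lambda>n. inverse (real (Suc n)))"
      by (rule ext) (simp add: inverse_eq_divide)
    have "(\<lambda>j. 1/(real j + 1)) \<longlonglongrightarrow> 0"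
      unfolding e by (rule LIMSEQ_inverse_real_of_nat)
    thus ?thesis by (rule tendsto_add[OF tendsto_const])
  qed
  ultimately have "(norm (x - m))^2 \<le> d^2 + 0"
  proof (rule LIMSEQ_le)
    show "\<exists>N. \<forall>n\<ge>N. (norm (x - ms n))^2 \<le> d^2 + 1/(real n + 1)"
      using ms(2) by (intro exI[of _ 0] allI impI less_imp_le) 
  qed
  hence nd: "norm (x - m) \<le> d" using d0 power2_le_imp_le[of "norm (x - m)" d] by simp
  have min: "\<forall>w\<in>M. norm (x - m) \<le> norm ((x - m) - w)"
  proof
    fix w assume "w \<in> M"
    hence "m + w \<in> M" using mM M subsp_add by blast
    hence "d \<le> norm (x - (m + w))" by (rule dle)
    thus "norm (x - m) \<le> norm ((x - m) - w)" using nd by (simp add: diff_diff_eq)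
  qed
  have "x - m \<in> orth_compl M"
    by (rule orth_complI, rule min_orth[OF M min], assumption)
  thus ?thesis using mM by blast
qed


lemma scaleC_scaleR_comm: "c *\<^sub>C (r *\<^sub>R x) = r *\<^sub>R (c *\<^sub>C (x::'a::complex_vector))"
  by (simp add: scaleR_scaleC scaleC_scaleC mult.commute)

lemma bl_scaleC: "bounded_linear (\<lambda>x::'a::complex_inner. c *\<^sub>C x)"
  by (rule bounded_linear_intro[where K="cmod c"])
     (simp_all add: scaleC_add_right scaleC_scaleR_comm norm_scaleC mult.commute)

lemma tendsto_scaleC: "X \<longlonglongrightarrow> l \<Longrightarrow> (\<lambda>n. c *\<^sub>C X n) \<longlonglongrightarrow> c *\<^sub>C (l::'a::complex_inner)"
  by (rule bounded_linear.tendsto[OF bl_scaleC])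

lemma Im_cinner_rin: "Im (cinner a y) = rin (\<i> *\<^sub>C a) y"
  by (simp add: rin_def cinner_scaleC_left)

lemma rin_tendsto:
  assumes "X \<longlonglongrightarrow> (l::'a::complex_inner)"
  shows "(\<lambda>n. rin (X n) y) \<longlonglongrightarrow> rin l y"
proof -
  have "(\<lambda>n. ((norm (X n + y))^2 - (norm (X n - y))^2) / 4) \<longlonglongrightarrow> ((norm (l + y))^2 - (norm (l - y))^2) / 4"
  proof -
    have a: "(\<lambda>n. X n + y) \<longlonglongrightarrow> l + y" by (rule tendsto_add[OF assms tendsto_const])
    have b: "(\<lambda>n. X n - y) \<longlonglongrightarrow> l - y" by (rule tendsto_diff[OF assms tendsto_const])
    show ?thesis
      by (rule tendsto_divide[OF tendsto_diff[OF tendsto_power[OF tendsto_norm[OF a]] tendsto_power[OF tendsto_norm[OF b]]] tendsto_const]) simp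
  qed
  thus ?thesis by (simp only: rin_polar[symmetric])
qed

lemma cinner_tendsto:
  assumes "X \<longlonglongrightarrow> (l::'a::complex_inner)"
  shows "(\<lambda>n. cinner (X n) y) \<longlonglongrightarrow> cinner l y"
proof -
  have "(\<lambda>n. Re (cinner (X n) y)) \<longlonglongrightarrow> Re (cinner l y)"
    using rin_tendsto[OF assms, of y] by (simp add: rin_def)
  moreover have "(\<lambda>n. Im (cinner (X n) y)) \<longlonglongrightarrow> Im (cinner l y)"
    using rin_tendsto[OF tendsto_scaleC[OF assms, of \<i>], of y] by (simp only: Im_cinner_rin)
  ultimately show ?thesis by (simp add: tendsto_complex_iff)
qed

lemma orth_compl_subsp: "subsp (orth_compl S)"
  unfolding subsp_def orth_compl_def
  by (simp add: cinner_add_left cinner_scaleC_left)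

lemma orth_compl_closed: "closed (orth_compl (S::'a::chilbert_space set))"
  unfolding closed_sequential_limits
proof (intro allI impI, elim conjE)
  fix X and l :: 'a
  assume X: "\<forall>n. X n \<in> orth_compl S" and lim: "X \<longlonglongrightarrow> l"
  show "l \<in> orth_compl S"
  proof (rule orth_complI)
    fix y assume y: "y \<in> S"
    have "(\<lambda>n. cinner (X n) y) \<longlonglongrightarrow> cinner l y" by (rule cinner_tendsto[OF lim])
    moreover have "(\<lambda>n. cinner (X n) y) = (\<lambda>n. 0)" using X y orth_complD by blast
    ultimately have "(\<lambda>n. 0) \<longlonglongrightarrow> cinner l y" by simp
    from LIMSEQ_unique[OF tendsto_const this] show "cinner l y = 0" by simp
  qed
qed

lemma orth_compl_closed_subspace: "closed_subspace (orth_compl (S::'a::chilbert_space set))"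
  using orth_compl_subsp orth_compl_closed closed_subspace_iff by blast

lemma cinner_self_zero: "cinner w w = 0 \<Longrightarrow> w = 0"
  using cinner_eq_zero_iff by blast

lemma inter_orth_zero: "w \<in> M \<Longrightarrow> w \<in> orth_compl M \<Longrightarrow> w = 0"
  using orth_complD cinner_eq_zero_iff by blast

lemma decomp_unique:
  assumes M: "subsp M" and "e1 \<in> M" "e2 \<in> M" "x - e1 \<in> orth_compl M" "x - e2 \<in> orth_compl M"
  shows "e1 = e2"
proof -
  have "e1 - e2 \<in> M" using assms subsp_diff by blast
  moreover have "(x - e2) - (x - e1) \<in> orth_compl M"
    using assms orth_compl_subsp subsp_diff by blast
  moreover have "(x - e2) - (x - e1) = e1 - e2" by simp
  ultimately have "e1 - e2 = 0" using inter_orth_zero[of "e1 - e2" M] by simp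
  thus ?thesis by simp
qed

definition proj :: "'a::chilbert_space set \<Rightarrow> 'a \<Rightarrow> 'a" where
  "proj M x = (SOME e. e \<in> M \<and> x - e \<in> orth_compl M)"

lemma proj:
  assumes "closed_subspace M"
  shows "proj M x \<in> M" "x - proj M x \<in> orth_compl M"
proof -
  have "\<exists>e. e \<in> M \<and> x - e \<in> orth_compl M" using proj_exists[OF assms] by blast
  hence "proj M x \<in> M \<and> x - proj M x \<in> orth_compl M"
    unfolding proj_def by (rule someI_ex)
  thus "proj M x \<in> M" "x - proj M x \<in> orth_compl M" by auto
qed

lemma proj_eqI:
  assumes "closed_subspace M" "e \<in> M" "x - e \<in> orth_compl M"
  shows "proj M x = e"
  using decomp_unique[of M "proj M x" e x] proj[OF assms(1)] assms closed_subspace_iff by blast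

lemma pythag:
  assumes "cinner a b = 0"
  shows "(norm (a + b))^2 = (norm a)^2 + (norm (b::'a::chilbert_space))^2"
  using assms by (simp add: norm_add_sq rin_def)

lemma proj_norm:
  assumes "closed_subspace M"
  shows "(norm x)^2 = (norm (proj M x))^2 + (norm (x - proj M x))^2"
proof -
  have "cinner (proj M x) (x - proj M x) = 0"
    using proj[OF assms] orth_complD' by blast
  from pythag[OF this] show ?thesis by simp
qed

lemma proj_norm_le:
  assumes "closed_subspace M"
  shows "norm (proj M x) \<le> norm x"
proof -
  have "(norm (proj M x))^2 \<le> (norm x)^2" using proj_norm[OF assms, of x] by simp
  thus ?thesis by (rule power2_le_imp_le) simp
qed

lemma proj_add:
  assumes cs: "closed_subspace M"
  shows "proj M (x + y) = proj M x + proj M y"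
proof (rule proj_eqI[OF cs])
  have M: "subsp M" using cs closed_subspace_iff by blast
  show "proj M x + proj M y \<in> M" using proj[OF cs] subsp_add[OF M] by blast
  have "(x - proj M x) + (y - proj M y) \<in> orth_compl M"
    using proj[OF cs] subsp_add[OF orth_compl_subsp] by blast
  moreover have "(x - proj M x) + (y - proj M y) = x + y - (proj M x + proj M y)" by simp
  ultimately show "x + y - (proj M x + proj M y) \<in> orth_compl M" by simp
qed

lemma proj_scaleC:
  assumes cs: "closed_subspace M"
  shows "proj M (c *\<^sub>C x) = c *\<^sub>C proj M x"
proof (rule proj_eqI[OF cs])
  have M: "subsp M" using cs closed_subspace_iff by blast
  show "c *\<^sub>C proj M x \<in> M" using proj[OF cs] subsp_scaleC[OF M] by blast
  have "c *\<^sub>C (x - proj M x) \<in> orth_compl M"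
    using proj[OF cs] subsp_scaleC[OF orth_compl_subsp] by blast
  thus "c *\<^sub>C x - c *\<^sub>C proj M x \<in> orth_compl M" by (simp add: scaleC_diff_right)
qed

lemma cs_subsp: "closed_subspace M \<Longrightarrow> subsp M"
  by (simp add: closed_subspace_iff)

lemma proj_id: "closed_subspace M \<Longrightarrow> x \<in> M \<Longrightarrow> proj M x = x"
  using proj_eqI[of M x x] subsp_0[OF orth_compl_subsp, of M] by simp

lemma proj_orth: "closed_subspace M \<Longrightarrow> x \<in> orth_compl M \<Longrightarrow> proj M x = 0"
  using proj_eqI[of M 0 x] subsp_0[OF cs_subsp, of M] by simp

lemma bl_proj:
  assumes cs: "closed_subspace M"
  shows "bounded_linear (proj M)"
  by (rule bounded_linear_intro[where K=1])
     (simp_all add: proj_add[OF cs] proj_scaleC[OF cs] scaleR_scaleC proj_norm_le[OF cs])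

lemma closure_subsp:
  assumes D: "subsp (D::'a::chilbert_space set)"
  shows "subsp (closure D)"
  unfolding subsp_def
proof (intro conjI ballI allI)
  show "0 \<in> closure D" using subsp_0[OF D] closure_subset[of D] by (simp add: subset_iff)
  fix x y assume x: "x \<in> closure D" and y: "y \<in> closure D"
  obtain X where X: "\<forall>n. X n \<in> D" "X \<longlonglongrightarrow> x" using x unfolding closure_sequential by blast
  obtain Y where Y: "\<forall>n. Y n \<in> D" "Y \<longlonglongrightarrow> y" using y unfolding closure_sequential by blast
  have "(\<lambda>n. X n + Y n) \<longlonglongrightarrow> x + y" by (rule tendsto_add[OF X(2) Y(2)])
  moreover have "\<forall>n. X n + Y n \<in> D" using X Y subsp_add[OF D] by blast
  ultimately show "x + y \<in> closure D" unfolding closure_sequential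
    by (intro exI[of _ "\<lambda>n. X n + Y n"] conjI) auto
next
  fix c and x assume x: "x \<in> closure D"
  obtain X where X: "\<forall>n. X n \<in> D" "X \<longlonglongrightarrow> x" using x unfolding closure_sequential by blast
  have "(\<lambda>n. c *\<^sub>C X n) \<longlonglongrightarrow> c *\<^sub>C x" by (rule tendsto_scaleC[OF X(2)])
  moreover have "\<forall>n. c *\<^sub>C X n \<in> D" using X subsp_scaleC[OF D] by blast
  ultimately show "c *\<^sub>C x \<in> closure D" unfolding closure_sequential
    by (intro exI[of _ "\<lambda>n. c *\<^sub>C X n"] conjI) auto
qed

lemma dense_crit:
  fixes M :: "'a::chilbert_space set"
  assumes cs: "closed_subspace M" and DM: "D \<subseteq> M" and D: "subsp D"
    and crit: "\<And>k. k \<in> M \<Longrightarrow> (\<forall>d\<in>D. cinner d k = 0) \<Longrightarrow> k = 0"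
  shows "M \<subseteq> closure D"
proof
  fix x assume x: "x \<in> M"
  have ccs: "closed_subspace (closure D)" using closure_subsp[OF D] closed_subspace_iff by blast
  define p where "p = proj (closure D) x"
  have p: "p \<in> closure D" "x - p \<in> orth_compl (closure D)" using proj[OF ccs] p_def by auto
  have "closure D \<subseteq> M" using cs DM closure_minimal closed_subspace_iff by blast
  hence "x - p \<in> M" using p x cs subsp_diff closed_subspace_iff by blast
  moreover have "\<forall>d\<in>D. cinner d (x - p) = 0"
    using p(2) closure_subset orth_complD' by blast
  ultimately have "x - p = 0" by (rule crit)
  thus "x \<in> closure D" using p by simp
qed

lemma agree_dense:
  fixes M :: "'a::chilbert_space set" and f :: "'a \<Rightarrow> 'b::real_normed_vector"
  assumes MD: "M \<subseteq> closure D" and DM: "D \<subseteq> M" and sM: "subsp M"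
    and add: "\<And>x y. x \<in> M \<Longrightarrow> y \<in> M \<Longrightarrow> f (x + y) = f x + f y"
    and bnd: "\<And>x. x \<in> M \<Longrightarrow> norm (f x) \<le> K * norm x"
    and z: "\<And>d. d \<in> D \<Longrightarrow> f d = 0"
    and x: "x \<in> M"
  shows "f x = 0"
proof -
  obtain X where X: "\<forall>n. X n \<in> D" "X \<longlonglongrightarrow> x" using MD x closure_sequential by blast
  have eq: "norm (f x) \<le> K * norm (x - X n)" for n
  proof -
    have XM: "X n \<in> M" using X DM by blast
    have "x - X n \<in> M" using subsp_diff[OF sM x XM] .
    have "f x = f ((x - X n) + X n)" by simp
    also have "\<dots> = f (x - X n)" using add[OF \<open>x - X n \<in> M\<close> XM] z X by simp
    finally show ?thesis using bnd[OF \<open>x - X n \<in> M\<close>] by simp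
  qed
  have "(\<lambda>n. K * norm (x - X n)) \<longlonglongrightarrow> K * norm (x - x)"
    by (rule tendsto_mult[OF tendsto_const tendsto_norm[OF tendsto_diff[OF tendsto_const X(2)]]])
  hence "norm (f x) \<le> K * norm (x - x)"
    by (rule LIMSEQ_le[OF tendsto_const]) (use eq in blast)
  thus ?thesis by simp
qed


definition dlt :: "nat \<Rightarrow> 'a::chilbert_space \<Rightarrow> nat \<Rightarrow> 'a" where
  "dlt n x = (\<lambda>k. if k = n then x else 0)"

definition trunc :: "nat \<Rightarrow> (nat \<Rightarrow> 'a::chilbert_space) \<Rightarrow> nat \<Rightarrow> 'a" where
  "trunc n s = (\<lambda>k. if k < n then s k else 0)"

definition tail :: "nat \<Rightarrow> (nat \<Rightarrow> 'a::chilbert_space) \<Rightarrow> nat \<Rightarrow> 'a" where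
  "tail n s = (\<lambda>k. if k < n then 0 else s k)"

lemma row_entry_dlt: "row_entry V n x = V (dlt n x)"
  by (simp add: row_entry_def dlt_def)

lemma l2seqI: "(\<And>k. s k \<in> L) \<Longrightarrow> summable (\<lambda>k. (norm (s k))\<^sup>2) \<Longrightarrow> s \<in> l2seq L"
  by (simp add: l2seq_def)

lemma l2seqD: "s \<in> l2seq L \<Longrightarrow> s k \<in> L" "s \<in> l2seq L \<Longrightarrow> summable (\<lambda>k. (norm (s k))\<^sup>2)"
  by (simp_all add: l2seq_def)

lemma dlt_l2: "0 \<in> L \<Longrightarrow> x \<in> L \<Longrightarrow> dlt n x \<in> l2seq L"
proof (rule l2seqI)
  show "0 \<in> L \<Longrightarrow> x \<in> L \<Longrightarrow> dlt n x k \<in> L" for k by (simp add: dlt_def)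
  show "summable (\<lambda>k. (norm (dlt n x k))\<^sup>2)"
    by (rule summable_finite[of "{n}"]) (auto simp: dlt_def)
qed

lemma l2norm_dlt: "l2norm (dlt n x) = norm x"
proof -
  have "(\<Sum>k. (norm (dlt n x k))\<^sup>2) = (\<Sum>k\<in>{n}. (norm (dlt n x k))\<^sup>2)"
    by (rule suminf_finite) (auto simp: dlt_def)
  thus ?thesis by (simp add: l2norm_def dlt_def)
qed

lemma zero_l2: "0 \<in> L \<Longrightarrow> (\<lambda>k. 0) \<in> l2seq L"
  by (rule l2seqI) simp_all

lemma l2norm_zero: "l2norm (\<lambda>k. 0::'a::chilbert_space) = 0"
  by (simp add: l2norm_def)

lemma trunc_l2: "0 \<in> L \<Longrightarrow> s \<in> l2seq L \<Longrightarrow> trunc n s \<in> l2seq L"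
proof (rule l2seqI)
  show "0 \<in> L \<Longrightarrow> s \<in> l2seq L \<Longrightarrow> trunc n s k \<in> L" for k by (simp add: trunc_def l2seq_def)
  show "summable (\<lambda>k. (norm (trunc n s k))\<^sup>2)"
    by (rule summable_finite[of "{..<n}"]) (auto simp: trunc_def)
qed

lemma tail_l2: "0 \<in> L \<Longrightarrow> s \<in> l2seq L \<Longrightarrow> tail n s \<in> l2seq L"
proof (rule l2seqI)
  assume "0 \<in> L" "s \<in> l2seq L"
  thus "tail n s k \<in> L" for k by (simp add: tail_def l2seq_def)
  show "summable (\<lambda>k. (norm (tail n s k))\<^sup>2)"
    by (rule summable_comparison_test'[OF l2seqD(2)[OF \<open>s \<in> l2seq L\<close>]]) (simp add: tail_def)
qed

lemma trunc_tail: "s = seq_add (trunc n s) (tail n s)"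
  by (simp add: seq_add_def trunc_def tail_def fun_eq_iff)

lemma trunc_Suc: "trunc (Suc n) s = seq_add (trunc n s) (dlt n (s n))"
  by (auto simp: seq_add_def trunc_def dlt_def fun_eq_iff)

lemma trunc_0: "trunc 0 s = (\<lambda>k. 0)"
  by (simp add: trunc_def)

lemma l2norm_tail_lim:
  assumes s: "s \<in> l2seq L"
  shows "(\<lambda>n. l2norm (tail n s)) \<longlonglongrightarrow> 0"
proof -
  define f where "f = (\<lambda>k. (norm (s k))\<^sup>2)"
  have sf: "summable f" using l2seqD(2)[OF s] f_def by simp
  have eq: "(\<Sum>k. (norm (tail n s k))\<^sup>2) = suminf f - (\<Sum>k<n. f k)" for n
  proof -
    have "(\<lambda>k. if k \<in> {..<n} then f k else 0) sums (\<Sum>k\<in>{..<n}. f k)"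
      by (rule sums_If_finite_set) simp
    hence s2: "summable (\<lambda>k. if k \<in> {..<n} then f k else 0)"
      and v2: "(\<Sum>k. if k \<in> {..<n} then f k else 0) = (\<Sum>k<n. f k)"
      by (auto simp: sums_iff)
    have "suminf f - (\<Sum>k<n. f k) = (\<Sum>k. f k - (if k \<in> {..<n} then f k else 0))"
      using suminf_diff[OF sf s2] v2 by simp
    also have "(\<lambda>k. f k - (if k \<in> {..<n} then f k else 0)) = (\<lambda>k. (norm (tail n s k))\<^sup>2)"
      by (auto simp: f_def tail_def fun_eq_iff)
    finally show ?thesis by simp
  qed
  have "(\<lambda>n. sqrt (suminf f - (\<Sum>k<n. f k))) \<longlonglongrightarrow> sqrt (suminf f - suminf f)"
    by (rule tendsto_real_sqrt[OF tendsto_diff[OF tendsto_const summable_LIMSEQ[OF sf]]])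
  thus ?thesis by (simp add: l2norm_def eq)
qed

lemma bop_zero:
  assumes "bop_l2 L C V" "0 \<in> L"
  shows "V (\<lambda>k. 0) = 0"
proof -
  have "V (seq_scale 0 (\<lambda>k. 0)) = 0 *\<^sub>C V (\<lambda>k. 0)"
    using assms zero_l2[OF assms(2)] unfolding bop_l2_def by blast
  thus ?thesis by (simp add: seq_scale_def)
qed

lemma bop_trunc:
  assumes V: "bop_l2 L C V" and L0: "0 \<in> L" and s: "s \<in> l2seq L"
  shows "V (trunc n s) = (\<Sum>k<n. V (dlt k (s k)))"
proof (induction n)
  case 0 thus ?case using bop_zero[OF V L0] by (simp add: trunc_0)
next
  case (Suc n)
  have "V (trunc (Suc n) s) = V (trunc n s) + V (dlt n (s n))"
    unfolding trunc_Suc using V trunc_l2[OF L0 s] dlt_l2[OF L0 l2seqD(1)[OF s]]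
    unfolding bop_l2_def by blast
  thus ?case using Suc by simp
qed

lemma bop_lim:
  assumes V: "bop_l2 L C V" and L0: "0 \<in> L" and s: "s \<in> l2seq L"
  shows "(\<lambda>n. \<Sum>k<n. V (dlt k (s k))) \<longlonglongrightarrow> V s"
proof -
  obtain K where K: "\<forall>t\<in>l2seq L. norm (V t) \<le> K * l2norm t" using V unfolding bop_l2_def by blast
  have split: "V s = V (trunc n s) + V (tail n s)" for n
    using V trunc_l2[OF L0 s] tail_l2[OF L0 s] trunc_tail[of s n] unfolding bop_l2_def by metis
  have "(\<lambda>n. V (tail n s)) \<longlonglongrightarrow> 0"
  proof (rule Lim_null_comparison)
    show "\<forall>\<^sub>F n in sequentially. norm (V (tail n s)) \<le> K * l2norm (tail n s)"
      using K tail_l2[OF L0 s] by simp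
    show "(\<lambda>n. K * l2norm (tail n s)) \<longlonglongrightarrow> 0"
      using tendsto_mult[OF tendsto_const l2norm_tail_lim[OF s], of K] by simp
  qed
  hence "(\<lambda>n. V s - V (tail n s)) \<longlonglongrightarrow> V s - 0" by (rule tendsto_diff[OF tendsto_const])
  moreover have "V s - V (tail n s) = (\<Sum>k<n. V (dlt k (s k)))" for n
    using split[of n] bop_trunc[OF V L0 s, of n] by (simp add: algebra_simps)
  ultimately show ?thesis by simp
qed


lemma closed_subspace_Int:
  "closed_subspace A \<Longrightarrow> closed_subspace B \<Longrightarrow> closed_subspace (A \<inter> B)"
  unfolding closed_subspace_def by auto

lemma subsp_sum: "subsp M \<Longrightarrow> (\<And>k. k < (n::nat) \<Longrightarrow> f k \<in> M) \<Longrightarrow> (\<Sum>k<n. f k) \<in> M"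
  by (induction n) (auto intro: subsp_0 subsp_add)

lemma scaleC_sum: "c *\<^sub>C (\<Sum>k<(n::nat). f k) = (\<Sum>k<n. c *\<^sub>C (f k::'a::complex_vector))"
  by (induction n) (simp_all add: scaleC_add_right)

lemma norm_le_l2norm:
  assumes "s \<in> l2seq L"
  shows "norm (s k) \<le> l2norm s"
proof -
  have "(\<Sum>j\<in>{k}. (norm (s j))\<^sup>2) \<le> (\<Sum>j. (norm (s j))\<^sup>2)"
    by (rule sum_le_suminf[OF l2seqD(2)[OF assms]]) auto
  hence "(norm (s k))\<^sup>2 \<le> (\<Sum>j. (norm (s j))\<^sup>2)" by simp
  hence "sqrt ((norm (s k))\<^sup>2) \<le> l2norm s" unfolding l2norm_def by (rule real_sqrt_le_mono)
  thus ?thesis by simp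
qed

lemma l2norm_eq0:
  assumes "s \<in> l2seq L" "l2norm s = 0"
  shows "s = (\<lambda>k. 0)"
proof
  fix k show "s k = 0" using norm_le_l2norm[OF assms(1), of k] assms(2) by simp
qed

definition lbd :: "'a::chilbert_space set \<Rightarrow> ('a \<Rightarrow> 'b::real_normed_vector) \<Rightarrow> bool" where
  "lbd M f \<longleftrightarrow> (\<forall>x\<in>M. \<forall>y\<in>M. f (x + y) = f x + f y) \<and> (\<exists>K. \<forall>x\<in>M. norm (f x) \<le> K * norm x)"

lemma lbd_diff:
  assumes "lbd M f" "lbd M g" shows "lbd M (\<lambda>x. f x - g x)"
proof -
  obtain K1 where K1: "\<forall>x\<in>M. norm (f x) \<le> K1 * norm x" using assms(1) lbd_def by blast
  obtain K2 where K2: "\<forall>x\<in>M. norm (g x) \<le> K2 * norm x" using assms(2) lbd_def by blast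
  have "\<forall>x\<in>M. norm (f x - g x) \<le> (K1 + K2) * norm x"
  proof
    fix x assume "x \<in> M"
    have "norm (f x - g x) \<le> norm (f x) + norm (g x)" by (rule norm_triangle_ineq4)
    also have "\<dots> \<le> K1 * norm x + K2 * norm x" using K1 K2 \<open>x \<in> M\<close> by (meson add_mono)
    finally show "norm (f x - g x) \<le> (K1 + K2) * norm x" by (simp add: algebra_simps)
  qed
  moreover have "\<forall>x\<in>M. \<forall>y\<in>M. f (x + y) - g (x + y) = (f x - g x) + (f y - g y)"
    using assms unfolding lbd_def by (simp add: algebra_simps)
  ultimately show ?thesis unfolding lbd_def by blast
qed

lemma lbd_comp_bl:
  assumes "lbd M f" "bounded_linear g" shows "lbd M (\<lambda>x. g (f x))"
proof -
  obtain K1 where K1: "\<forall>x\<in>M. norm (f x) \<le> K1 * norm x" using assms(1) lbd_def by blast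
  obtain K2 where K2: "\<And>x. norm (g x) \<le> norm x * K2" and K2p: "K2 > 0"
    using bounded_linear.pos_bounded[OF assms(2)] by blast
  have "\<forall>x\<in>M. norm (g (f x)) \<le> (K2 * K1) * norm x"
  proof
    fix x assume "x \<in> M"
    have "norm (g (f x)) \<le> norm (f x) * K2" by (rule K2)
    also have "\<dots> \<le> (K1 * norm x) * K2" using K1 \<open>x \<in> M\<close> K2p by (simp add: mult_right_mono)
    finally show "norm (g (f x)) \<le> (K2 * K1) * norm x" by (simp add: algebra_simps)
  qed
  moreover have "\<forall>x\<in>M. \<forall>y\<in>M. g (f (x + y)) = g (f x) + g (f y)"
    using assms(1) linear_add[OF bounded_linear.linear[OF assms(2)]] unfolding lbd_def by simp
  ultimately show ?thesis unfolding lbd_def by blast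
qed

lemma lbd_comp_map:
  assumes "lbd M' f" "lbd M g" "\<And>x. x \<in> M \<Longrightarrow> g x \<in> M'"
  shows "lbd M (\<lambda>x. f (g x))"
proof -
  obtain K1 where K1: "\<forall>x\<in>M'. norm (f x) \<le> K1 * norm x" using assms(1) lbd_def by blast
  obtain K2 where K2: "\<forall>x\<in>M. norm (g x) \<le> K2 * norm x" using assms(2) lbd_def by blast
  define K where "K = max K1 0"
  have K: "\<forall>x\<in>M'. norm (f x) \<le> K * norm x"
  proof
    fix x assume "x \<in> M'"
    hence "norm (f x) \<le> K1 * norm x" using K1 by blast
    also have "\<dots> \<le> K * norm x" unfolding K_def by (simp add: mult_right_mono)
    finally show "norm (f x) \<le> K * norm x" .
  qed
  have "\<forall>x\<in>M. norm (f (g x)) \<le> (K * K2) * norm x"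
  proof
    fix x assume x: "x \<in> M"
    have "norm (f (g x)) \<le> K * norm (g x)" using K assms(3)[OF x] by blast
    also have "\<dots> \<le> K * (K2 * norm x)" using K2 x unfolding K_def by (simp add: mult_left_mono)
    finally show "norm (f (g x)) \<le> (K * K2) * norm x" by (simp add: algebra_simps)
  qed
  moreover have "\<forall>x\<in>M. \<forall>y\<in>M. f (g (x + y)) = f (g x) + f (g y)"
    using assms unfolding lbd_def by simp
  ultimately show ?thesis unfolding lbd_def by blast
qed

lemma lin_bdd_on_lbd: "lin_bdd_on D C f \<Longrightarrow> lbd D f"
  unfolding lin_bdd_on_def lbd_def by blast

lemma bop_dlt_lbd:
  assumes "bop_l2 L C V" "subsp L"
  shows "lbd L (\<lambda>x. V (dlt n x))"
proof -
  have L0: "0 \<in> L" using assms(2) subsp_0 by blast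
  obtain K where K: "\<forall>s\<in>l2seq L. norm (V s) \<le> K * l2norm s" using assms(1) bop_l2_def by blast
  have "\<forall>x\<in>L. norm (V (dlt n x)) \<le> K * norm x"
    using K dlt_l2[OF L0] l2norm_dlt by metis
  moreover have "\<forall>x\<in>L. \<forall>y\<in>L. V (dlt n (x + y)) = V (dlt n x) + V (dlt n y)"
  proof (intro ballI)
    fix x y assume "x \<in> L" "y \<in> L"
    have "dlt n (x + y) = seq_add (dlt n x) (dlt n y)" by (auto simp: dlt_def seq_add_def fun_eq_iff)
    thus "V (dlt n (x + y)) = V (dlt n x) + V (dlt n y)"
      using assms(1) dlt_l2[OF L0 \<open>x \<in> L\<close>] dlt_l2[OF L0 \<open>y \<in> L\<close>] unfolding bop_l2_def by simp
  qed
  ultimately show ?thesis unfolding lbd_def by blast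
qed

lemma bop_dlt_scaleC:
  assumes "bop_l2 L C V" "subsp L" "x \<in> L"
  shows "V (dlt n (c *\<^sub>C x)) = c *\<^sub>C V (dlt n x)"
proof -
  have L0: "0 \<in> L" using assms(2) subsp_0 by blast
  have "dlt n (c *\<^sub>C x) = seq_scale c (dlt n x)" by (auto simp: dlt_def seq_scale_def fun_eq_iff)
  thus ?thesis using assms(1) dlt_l2[OF L0 assms(3)] unfolding bop_l2_def by simp
qed


locale qs =
  fixes R :: "'a::chilbert_space \<Rightarrow> 'a"
    and E H L :: "'a set"
    and P VT :: "'a \<Rightarrow> 'a"
    and UT :: "'a \<Rightarrow> nat \<Rightarrow> 'a"
    and l :: complex
  assumes quasinormal: "quasinormal_on UNIV R"
    and injective: "inj R"
    and canonical: "canonical_decomp R E H"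
    and modulus: "modulus_on H R P"
    and polar: "polar_part_on H R P VT"
    and L_def: "L = H \<inter> orth_compl (VT ` H)"
    and UT_unitary: "unitary_l2 H L UT"
    and UT_intertwines: "\<forall>h\<in>H. UT (R h) = tensorS P (UT h)"
    and l_in: "l \<in> sigma_ext R"
begin

lemma R_lin: "lin_bdd_on UNIV UNIV R"
  using quasinormal unfolding quasinormal_on_def op_on_def by blast

lemma R_add: "R (x + y) = R x + R y"
  using R_lin unfolding lin_bdd_on_def by blast

lemma R_scaleC: "R (c *\<^sub>C x) = c *\<^sub>C R x"
  using R_lin unfolding lin_bdd_on_def by blast

lemma R0: "R 0 = 0"
  using R_scaleC[of 0 0] by simp

lemma R_diff: "R (x - y) = R x - R y"
  using R_add[of "x - y" y] by (simp add: algebra_simps)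

lemma bl_R: "bounded_linear R"
proof -
  obtain K where K: "\<forall>x. norm (R x) \<le> K * norm x" using R_lin unfolding lin_bdd_on_def by blast
  show ?thesis
    by (rule bounded_linear_intro[where K=K]) (simp_all add: R_add scaleR_scaleC R_scaleC K mult.commute)
qed

lemma Rpow_scaleC: "(R ^^ n) (c *\<^sub>C x) = c *\<^sub>C (R ^^ n) x"
  by (induction n) (simp_all add: R_scaleC)

lemma Rpow_add: "(R ^^ n) (x + y) = (R ^^ n) x + (R ^^ n) y"
  by (induction n) (simp_all add: R_add)

lemma bl_Rpow: "bounded_linear (R ^^ n)"
proof (induction n)
  case 0 thus ?case by (simp add: bounded_linear_ident id_def)
next
  case (Suc n)
  have "bounded_linear (\<lambda>x. R ((R ^^ n) x))" by (rule bounded_linear_compose[OF bl_R Suc])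
  thus ?case by (simp add: comp_def)
qed

lemma R_sum: "R (\<Sum>k<(n::nat). f k) = (\<Sum>k<n. R (f k))"
  by (induction n) (simp_all add: R_add R0)

lemma inj_R: "R x = 0 \<Longrightarrow> x = 0"
  using injective R0 by (metis injD)

lemma csE: "closed_subspace E"
  using canonical unfolding canonical_decomp_def reduces_def by blast

lemma H_def: "H = orth_compl E"
  using canonical unfolding canonical_decomp_def by blast

lemma csH: "closed_subspace H"
  using H_def orth_compl_closed_subspace by simp

lemma sE: "subsp E" using csE cs_subsp by blast
lemma sH: "subsp H" using csH cs_subsp by blast

lemma RE: "x \<in> E \<Longrightarrow> R x \<in> E"
  using canonical unfolding canonical_decomp_def reduces_def by blast

lemma RH: "x \<in> H \<Longrightarrow> R x \<in> H"
  using canonical H_def unfolding canonical_decomp_def reduces_def by blast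

lemma RpowE: "x \<in> E \<Longrightarrow> (R ^^ n) x \<in> E"
  by (induction n) (simp_all add: RE)

lemma RpowH: "x \<in> H \<Longrightarrow> (R ^^ n) x \<in> H"
  by (induction n) (simp_all add: RH)

lemma pE: "proj E x \<in> E" "x - proj E x \<in> H"
  using proj[OF csE] H_def by auto

lemma pE_R: "proj E (R x) = R (proj E x)"
proof (rule proj_eqI[OF csE])
  show "R (proj E x) \<in> E" using RE pE by blast
  have "R (x - proj E x) \<in> H" using RH pE by blast
  thus "R x - R (proj E x) \<in> orth_compl E" using H_def R_diff by simp
qed

lemma pE_decomp: "e \<in> E \<Longrightarrow> h \<in> H \<Longrightarrow> proj E (e + h) = e"
  by (rule proj_eqI[OF csE]) (simp_all add: H_def)

lemma normalE: "\<exists>S. op_on E S \<and> (\<forall>x\<in>E. \<forall>y\<in>E. cinner (R x) y = cinner x (S y))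
          \<and> (\<forall>x\<in>E. R (S x) = S (R x))"
  using canonical unfolding canonical_decomp_def normal_on_def by blast

lemma P_op: "op_on H P" using modulus unfolding modulus_on_def by blast

lemma PH: "x \<in> H \<Longrightarrow> P x \<in> H" using P_op unfolding op_on_def lin_bdd_on_def by blast

lemma P_add: "x \<in> H \<Longrightarrow> y \<in> H \<Longrightarrow> P (x + y) = P x + P y"
  using P_op unfolding op_on_def lin_bdd_on_def by blast

lemma P_scaleC: "x \<in> H \<Longrightarrow> P (c *\<^sub>C x) = c *\<^sub>C P x"
  using P_op unfolding op_on_def lin_bdd_on_def by blast

lemma P0: "P 0 = 0"
  using P_scaleC[of 0 0] subsp_0[OF sH] by simp

lemma P_adj: "x \<in> H \<Longrightarrow> y \<in> H \<Longrightarrow> cinner (P x) y = cinner x (P y)"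
  using modulus unfolding modulus_on_def by blast

lemma P_norm: "x \<in> H \<Longrightarrow> norm (P x) = norm (R x)"
proof -
  assume x: "x \<in> H"
  have "cinner (P x) (P x) = cinner (R x) (R x)" using modulus x unfolding modulus_on_def by blast
  thus ?thesis by (simp add: norm_eq_sqrt_cinner)
qed

lemma P_inj: "x \<in> H \<Longrightarrow> P x = 0 \<Longrightarrow> x = 0"
  using P_norm inj_R by fastforce

lemma P_lbd: "lbd H P"
  using P_op lin_bdd_on_lbd unfolding op_on_def by blast

lemma UT_l2: "h \<in> H \<Longrightarrow> UT h \<in> l2seq L" using UT_unitary unfolding unitary_l2_def by blast
lemma UT_add: "x \<in> H \<Longrightarrow> y \<in> H \<Longrightarrow> UT (x + y) = seq_add (UT x) (UT y)"
  using UT_unitary unfolding unitary_l2_def by blast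
lemma UT_scaleC: "x \<in> H \<Longrightarrow> UT (c *\<^sub>C x) = seq_scale c (UT x)"
  using UT_unitary unfolding unitary_l2_def by blast
lemma UT_iso: "h \<in> H \<Longrightarrow> l2norm (UT h) = norm h"
  using UT_unitary unfolding unitary_l2_def by blast
lemma UT_surj: "s \<in> l2seq L \<Longrightarrow> \<exists>h\<in>H. UT h = s"
  using UT_unitary unfolding unitary_l2_def by blast

lemma UT_diff: "x \<in> H \<Longrightarrow> y \<in> H \<Longrightarrow> UT (x - y) = (\<lambda>k. UT x k - UT y k)"
proof -
  assume x: "x \<in> H" and y: "y \<in> H"
  have "x - y = x + (-1) *\<^sub>C y" by (simp add: uminus_scaleC[symmetric])
  have m: "(-1) *\<^sub>C y \<in> H" using subsp_scaleC[OF sH y] .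
  have "UT (x - y) = UT (x + (-1) *\<^sub>C y)" by (simp add: uminus_scaleC[symmetric])
  also have "UT (x + (-1) *\<^sub>C y) = seq_add (UT x) (UT ((-1) *\<^sub>C y))" by (rule UT_add[OF x m])
  also have "UT ((-1) *\<^sub>C y) = seq_scale (-1) (UT y)" by (rule UT_scaleC[OF y])
  finally have "UT (x - y) = seq_add (UT x) (seq_scale (-1) (UT y))" .
  thus ?thesis by (simp add: seq_add_def seq_scale_def uminus_scaleC[symmetric])
qed

lemma UT_inj: "x \<in> H \<Longrightarrow> y \<in> H \<Longrightarrow> UT x = UT y \<Longrightarrow> x = y"
proof -
  assume x: "x \<in> H" and y: "y \<in> H" and e: "UT x = UT y"
  have "UT (x - y) = (\<lambda>k. 0)" using UT_diff[OF x y] e by simp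
  hence "norm (x - y) = 0" using UT_iso[OF subsp_diff[OF sH x y]] l2norm_zero by metis
  thus ?thesis by simp
qed

lemma UT_comp_bound: "h \<in> H \<Longrightarrow> norm (UT h k) \<le> norm h"
  using norm_le_l2norm[OF UT_l2] UT_iso by metis

lemma csL: "closed_subspace L"
  unfolding L_def by (rule closed_subspace_Int[OF csH orth_compl_closed_subspace])

lemma sL: "subsp L" using csL cs_subsp by blast
lemma L0: "0 \<in> L" using sL subsp_0 by blast
lemma LH: "L \<subseteq> H" using L_def by blast

lemma tensorS_dlt: "tensorS P (dlt k x) = dlt (Suc k) (P x)"
  by (auto simp: tensorS_def dlt_def fun_eq_iff P0 split: nat.split)

lemma PL: "x \<in> L \<Longrightarrow> P x \<in> L"
proof -
  assume x: "x \<in> L"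
  obtain h where h: "h \<in> H" "UT h = dlt 0 x" using UT_surj[OF dlt_l2[OF L0 x]] by blast
  have "UT (R h) = dlt 1 (P x)" using UT_intertwines h tensorS_dlt by simp
  moreover have "UT (R h) \<in> l2seq L" using UT_l2 RH h(1) by blast
  ultimately have "dlt 1 (P x) 1 \<in> L" using l2seqD(1) by metis
  thus ?thesis by (simp add: dlt_def)
qed

lemma PpowL: "x \<in> L \<Longrightarrow> (P ^^ n) x \<in> L"
  by (induction n) (simp_all add: PL)

lemma l_nz: "l \<noteq> 0"
proof
  assume l0: "l = 0"
  have "Eext_on UNIV R l = {\<lambda>x. 0}"
  proof
    show "Eext_on UNIV R l \<subseteq> {\<lambda>x. 0}"
    proof
      fix X assume "X \<in> Eext_on UNIV R l"
      hence "\<forall>x. R (X x) = 0" using l0 unfolding Eext_on_def by simp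
      hence "X = (\<lambda>x. 0)" using inj_R by blast
      thus "X \<in> {\<lambda>x. 0}" by simp
    qed
    show "{\<lambda>x. 0} \<subseteq> Eext_on UNIV R l"
      unfolding Eext_on_def op_on_def lin_bdd_on_def by (auto simp: R0 intro!: exI[of _ 0])
  qed
  thus False using l_in unfolding sigma_ext_def by blast
qed

end


context qs begin

lemma PpowH: "x \<in> H \<Longrightarrow> (P ^^ n) x \<in> H"
  by (induction n) (simp_all add: PH)

lemma Ppow_add: "x \<in> H \<Longrightarrow> y \<in> H \<Longrightarrow> (P ^^ n) (x + y) = (P ^^ n) x + (P ^^ n) y"
  by (induction n) (simp_all add: P_add PpowH)

lemma Ppow_scaleC: "x \<in> H \<Longrightarrow> (P ^^ n) (c *\<^sub>C x) = c *\<^sub>C (P ^^ n) x"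
  by (induction n) (simp_all add: P_scaleC PpowH)

lemma Ppow0: "(P ^^ n) 0 = 0"
  by (induction n) (simp_all add: P0)

lemma Ppow_adj: "x \<in> H \<Longrightarrow> y \<in> H \<Longrightarrow> cinner ((P ^^ n) x) y = cinner x ((P ^^ n) y)"
proof (induction n arbitrary: y)
  case 0 thus ?case by simp
next
  case (Suc n)
  have "cinner ((P ^^ Suc n) x) y = cinner (P ((P ^^ n) x)) y" by simp
  also have "\<dots> = cinner ((P ^^ n) x) (P y)" using P_adj PpowH Suc.prems by blast
  also have "\<dots> = cinner x ((P ^^ n) (P y))" using Suc.IH PH Suc.prems by blast
  also have "(P ^^ n) (P y) = (P ^^ Suc n) y" by (simp add: funpow_swap1)
  finally show ?case .
qed

lemma Ppow_inj: "x \<in> H \<Longrightarrow> (P ^^ n) x = 0 \<Longrightarrow> x = 0"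
proof (induction n arbitrary: x)
  case 0 thus ?case by simp
next
  case (Suc n)
  have "(P ^^ n) (P x) = 0" using Suc.prems by (simp add: funpow_swap1)
  hence "P x = 0" using Suc.IH PH Suc.prems by blast
  thus ?case using P_inj Suc.prems by blast
qed

lemma dense_Ppow: "L \<subseteq> closure ((P ^^ n) ` L)"
proof (rule dense_crit[OF csL])
  show "(P ^^ n) ` L \<subseteq> L" using PpowL by blast
  show "subsp ((P ^^ n) ` L)"
    unfolding subsp_def
  proof (intro conjI ballI allI)
    show "0 \<in> (P ^^ n) ` L" using L0 Ppow0 by (metis image_eqI)
    fix a b assume "a \<in> (P ^^ n) ` L" "b \<in> (P ^^ n) ` L"
    then obtain x y where "x \<in> L" "y \<in> L" "a = (P ^^ n) x" "b = (P ^^ n) y" by blast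
    moreover have "x \<in> H" "y \<in> H" using LH \<open>x \<in> L\<close> \<open>y \<in> L\<close> by auto
    ultimately have "a + b = (P ^^ n) (x + y)" using Ppow_add[of x y n] by simp
    moreover have "x + y \<in> L" using subsp_add[OF sL \<open>x \<in> L\<close> \<open>y \<in> L\<close>] .
    ultimately show "a + b \<in> (P ^^ n) ` L" by blast
  next
    fix c a assume "a \<in> (P ^^ n) ` L"
    then obtain x where "x \<in> L" "a = (P ^^ n) x" by blast
    moreover have "x \<in> H" using LH \<open>x \<in> L\<close> by auto
    ultimately have "c *\<^sub>C a = (P ^^ n) (c *\<^sub>C x)" using Ppow_scaleC[of x n c] by simp
    moreover have "c *\<^sub>C x \<in> L" using subsp_scaleC[OF sL \<open>x \<in> L\<close>] .
    ultimately show "c *\<^sub>C a \<in> (P ^^ n) ` L" by blast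
  qed
  fix k assume k: "k \<in> L" and orth: "\<forall>d\<in>(P ^^ n) ` L. cinner d k = 0"
  have "(P ^^ n) k \<in> L" using PpowL k by blast
  hence "cinner ((P ^^ n) ((P ^^ n) k)) k = 0" using orth by blast
  hence "cinner ((P ^^ n) k) ((P ^^ n) k) = 0" using Ppow_adj PpowH k LH by (metis subsetD)
  hence "(P ^^ n) k = 0" by (rule cinner_self_zero)
  thus "k = 0" using Ppow_inj k LH by blast
qed

lemma agree_Ppow:
  assumes "lbd L f" "\<And>y. y \<in> L \<Longrightarrow> f ((P ^^ n) y) = 0" "x \<in> L"
  shows "f x = 0"
proof -
  obtain K where K: "\<forall>x\<in>L. norm (f x) \<le> K * norm x" using assms(1) lbd_def by blast
  show ?thesis
  proof (rule agree_dense[OF dense_Ppow[of n] _ sL])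
    show "(P ^^ n) ` L \<subseteq> L" using PpowL by blast
    show "\<And>x y. x \<in> L \<Longrightarrow> y \<in> L \<Longrightarrow> f (x + y) = f x + f y" using assms(1) lbd_def by blast
    show "\<And>x. x \<in> L \<Longrightarrow> norm (f x) \<le> K * norm x" using K by blast
    show "\<And>d. d \<in> (P ^^ n) ` L \<Longrightarrow> f d = 0" using assms(2) by blast
    show "x \<in> L" by fact
  qed
qed

lemma Eint_step:
  assumes V: "V \<in> Eint_l2 E L R P l" and x: "x \<in> L"
  shows "R (V (dlt k x)) = l *\<^sub>C V (dlt (Suc k) (P x))"
  using V dlt_l2[OF L0 x, of k] tensorS_dlt unfolding Eint_l2_def by simp

lemma Eint_vals:
  assumes V: "V \<in> Eint_l2 E L R P l" and x: "x \<in> L"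
  shows "V (dlt n ((P ^^ n) x)) = (inverse l ^ n) *\<^sub>C (R ^^ n) (V (dlt 0 x))"
proof (induction n)
  case 0 thus ?case by (simp add: scaleC_one)
next
  case (Suc n)
  have y: "(P ^^ n) x \<in> L" using PpowL x by blast
  have "l *\<^sub>C V (dlt (Suc n) (P ((P ^^ n) x))) = R (V (dlt n ((P ^^ n) x)))"
    using Eint_step[OF V y] by simp
  hence "V (dlt (Suc n) (P ((P ^^ n) x))) = inverse l *\<^sub>C R (V (dlt n ((P ^^ n) x)))"
    using l_nz by (metis scaleC_scaleC left_inverse scaleC_one)
  also have "\<dots> = inverse l *\<^sub>C R ((inverse l ^ n) *\<^sub>C (R ^^ n) (V (dlt 0 x)))" using Suc by simp
  also have "\<dots> = (inverse l ^ Suc n) *\<^sub>C (R ^^ Suc n) (V (dlt 0 x))"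
    by (simp add: R_scaleC scaleC_scaleC)
  finally show ?case by simp
qed

end


lemma lbd_mono: "lbd M f \<Longrightarrow> M' \<subseteq> M \<Longrightarrow> lbd M' f"
  unfolding lbd_def by blast

context qs begin

lemma P_lbd_L: "lbd L P" using lbd_mono[OF P_lbd LH] .

lemma tensorS_l2:
  assumes s: "s \<in> l2seq L"
  shows "tensorS P s \<in> l2seq L"
proof (rule l2seqI)
  fix k show "tensorS P s k \<in> L"
    using L0 PL l2seqD(1)[OF s] by (simp add: tensorS_def split: nat.split)
next
  obtain K where K: "\<forall>x\<in>H. norm (P x) \<le> K * norm x"
    using P_op unfolding op_on_def lin_bdd_on_def by blast
  have sH: "s j \<in> H" for j using l2seqD(1)[OF s] LH by blast
  have b: "norm ((norm (P (s j)))\<^sup>2) \<le> K\<^sup>2 * (norm (s j))\<^sup>2" for j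
  proof -
    have "norm (P (s j)) \<le> K * norm (s j)" using K sH by blast
    hence "(norm (P (s j)))\<^sup>2 \<le> (K * norm (s j))\<^sup>2" by (rule power_mono) simp
    thus ?thesis by (simp add: power_mult_distrib)
  qed
  have "summable (\<lambda>j. (norm (P (s j)))\<^sup>2)"
    by (rule summable_comparison_test'[OF summable_mult[OF l2seqD(2)[OF s], of "K\<^sup>2"] b])
  hence "summable (\<lambda>j. (norm (tensorS P s (Suc j)))\<^sup>2)" by (simp add: tensorS_def)
  thus "summable (\<lambda>k. (norm (tensorS P s k))\<^sup>2)"
    using summable_Suc_iff[of "\<lambda>k. (norm (tensorS P s k))\<^sup>2"] by simp
qed

definition RHS2 where
  "RHS2 = {V. bop_l2 L E V
               \<and> row_entry V 0 \<in> A_class (cmod l) L E R P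
               \<and> (\<forall>n\<ge>1.
                    (\<forall>x\<in>L. row_entry V n ((P ^^ n) x) = (inverse l ^ n) *\<^sub>C (R ^^ n) (row_entry V 0 x))
                  \<and> (\<forall>Y. lin_bdd_on L E Y
                        \<and> (\<forall>x\<in>L. Y ((P ^^ n) x) = (inverse l ^ n) *\<^sub>C (R ^^ n) (row_entry V 0 x))
                        \<longrightarrow> (\<forall>y\<in>L. Y y = row_entry V n y)))}"

lemma part2_sub:
  assumes V: "V \<in> Eint_l2 E L R P l"
  shows "V \<in> RHS2"
proof -
  have bop: "bop_l2 L E V" using V unfolding Eint_l2_def by blast
  obtain K where K: "\<forall>s\<in>l2seq L. norm (V s) \<le> K * l2norm s" using bop bop_l2_def by blast
  have lbd0: "lbd L (\<lambda>x. V (dlt 0 x))" by (rule bop_dlt_lbd[OF bop sL])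
  have lin0: "lin_bdd_on L E (row_entry V 0)"
    unfolding lin_bdd_on_def row_entry_dlt
  proof (intro conjI ballI allI)
    fix x assume "x \<in> L"
    thus "V (dlt 0 x) \<in> E" using bop dlt_l2[OF L0] unfolding bop_l2_def by blast
  next
    fix x y assume "x \<in> L" "y \<in> L"
    thus "V (dlt 0 (x + y)) = V (dlt 0 x) + V (dlt 0 y)" using lbd0 unfolding lbd_def by blast
  next
    fix c x assume "x \<in> L"
    thus "V (dlt 0 (c *\<^sub>C x)) = c *\<^sub>C V (dlt 0 x)" by (rule bop_dlt_scaleC[OF bop sL])
  next
    show "\<exists>K. \<forall>x\<in>L. norm (V (dlt 0 x)) \<le> K * norm x" using lbd0 unfolding lbd_def by blast
  qed
  have normc: "\<forall>x\<in>L. \<forall>n::nat. norm (((1 / cmod l) ^ n) *\<^sub>R (R ^^ n) (row_entry V 0 x))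
                   \<le> max K 0 * norm ((P ^^ n) x)"
  proof (intro ballI allI)
    fix x n assume x: "x \<in> L"
    have "norm (((1 / cmod l) ^ n) *\<^sub>R (R ^^ n) (V (dlt 0 x)))
        = norm ((inverse l ^ n) *\<^sub>C (R ^^ n) (V (dlt 0 x)))"
      by (simp add: norm_scaleC norm_power norm_inverse divide_inverse)
    also have "\<dots> = norm (V (dlt n ((P ^^ n) x)))" using Eint_vals[OF V x] by simp
    also have "\<dots> \<le> K * l2norm (dlt n ((P ^^ n) x))" using K dlt_l2[OF L0 PpowL[OF x]] by blast
    also have "\<dots> = K * norm ((P ^^ n) x)" by (simp add: l2norm_dlt)
    also have "\<dots> \<le> max K 0 * norm ((P ^^ n) x)" by (simp add: mult_right_mono)
    finally show "norm (((1 / cmod l) ^ n) *\<^sub>R (R ^^ n) (row_entry V 0 x)) \<le> max K 0 * norm ((P ^^ n) x)"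
      by (simp add: row_entry_dlt)
  qed
  have A: "row_entry V 0 \<in> A_class (cmod l) L E R P"
    unfolding A_class_def using lin0 normc by (auto intro!: exI[of _ "max K 0"])
  have rest: "\<forall>n\<ge>1.
                    (\<forall>x\<in>L. row_entry V n ((P ^^ n) x) = (inverse l ^ n) *\<^sub>C (R ^^ n) (row_entry V 0 x))
                  \<and> (\<forall>Y. lin_bdd_on L E Y
                        \<and> (\<forall>x\<in>L. Y ((P ^^ n) x) = (inverse l ^ n) *\<^sub>C (R ^^ n) (row_entry V 0 x))
                        \<longrightarrow> (\<forall>y\<in>L. Y y = row_entry V n y))"
  proof (intro allI impI conjI ballI)
    fix n :: nat and x assume "x \<in> L"
    thus "row_entry V n ((P ^^ n) x) = (inverse l ^ n) *\<^sub>C (R ^^ n) (row_entry V 0 x)"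
      using Eint_vals[OF V] by (simp add: row_entry_dlt)
  next
    fix n :: nat and Y y
    assume Y: "lin_bdd_on L E Y \<and> (\<forall>x\<in>L. Y ((P ^^ n) x) = (inverse l ^ n) *\<^sub>C (R ^^ n) (row_entry V 0 x))"
      and y: "y \<in> L"
    have lf: "lbd L (\<lambda>z. Y z - V (dlt n z))"
      by (rule lbd_diff[OF lin_bdd_on_lbd bop_dlt_lbd[OF bop sL]]) (use Y in blast)
    have "Y y - V (dlt n y) = 0"
    proof (rule agree_Ppow[OF lf _ y])
      fix z assume z: "z \<in> L"
      show "Y ((P ^^ n) z) - V (dlt n ((P ^^ n) z)) = 0"
        using Y z Eint_vals[OF V z] by (simp add: row_entry_dlt)
    qed
    thus "Y y = row_entry V n y" by (simp add: row_entry_dlt)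
  qed
  show ?thesis unfolding RHS2_def using bop A rest by blast
qed

end


context qs begin

lemma part2_sup:
  assumes V: "V \<in> RHS2"
  shows "V \<in> Eint_l2 E L R P l"
proof -
  have bop: "bop_l2 L E V" using V unfolding RHS2_def by blast
  have vals: "V (dlt n ((P ^^ n) y)) = (inverse l ^ n) *\<^sub>C (R ^^ n) (V (dlt 0 y))" if y: "y \<in> L" for n y
  proof (cases "n = 0")
    case True thus ?thesis by (simp add: scaleC_one)
  next
    case False
    hence "n \<ge> 1" by simp
    thus ?thesis using V y unfolding RHS2_def row_entry_dlt by blast
  qed
  have step: "R (V (dlt k x)) = l *\<^sub>C V (dlt (Suc k) (P x))" if x: "x \<in> L" for k x
  proof -
    have l1: "lbd L (\<lambda>x. R (V (dlt k x)))"
      by (rule lbd_comp_bl[OF bop_dlt_lbd[OF bop sL] bl_R])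
    have l2: "lbd L (\<lambda>x. l *\<^sub>C V (dlt (Suc k) (P x)))"
      by (rule lbd_comp_bl[OF lbd_comp_map[OF bop_dlt_lbd[OF bop sL] P_lbd_L PL] bl_scaleC])
    have "R (V (dlt k x)) - l *\<^sub>C V (dlt (Suc k) (P x)) = 0"
    proof (rule agree_Ppow[OF lbd_diff[OF l1 l2] _ x])
      fix y assume y: "y \<in> L"
      have "R (V (dlt k ((P ^^ k) y))) = (inverse l ^ k) *\<^sub>C (R ^^ Suc k) (V (dlt 0 y))"
        using vals[OF y, of k] by (simp add: R_scaleC)
      moreover have "l *\<^sub>C V (dlt (Suc k) (P ((P ^^ k) y))) = (inverse l ^ k) *\<^sub>C (R ^^ Suc k) (V (dlt 0 y))"
      proof -
        have "V (dlt (Suc k) (P ((P ^^ k) y))) = (inverse l ^ Suc k) *\<^sub>C (R ^^ Suc k) (V (dlt 0 y))"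
          using vals[OF y, of "Suc k"] by simp
        hence "l *\<^sub>C V (dlt (Suc k) (P ((P ^^ k) y))) = (l * inverse l ^ Suc k) *\<^sub>C (R ^^ Suc k) (V (dlt 0 y))"
          by (simp add: scaleC_scaleC)
        also have "l * inverse l ^ Suc k = inverse l ^ k" using l_nz by simp
        finally show ?thesis .
      qed
      ultimately show "R (V (dlt k ((P ^^ k) y))) - l *\<^sub>C V (dlt (Suc k) (P ((P ^^ k) y))) = 0"
        by simp
    qed
    thus ?thesis by simp
  qed
  have comm: "R (V s) = l *\<^sub>C V (tensorS P s)" if s: "s \<in> l2seq L" for s
  proof -
    define t where "t = tensorS P s"
    have t: "t \<in> l2seq L" unfolding t_def by (rule tensorS_l2[OF s])
    define B where "B n = (\<Sum>k<n. V (dlt (Suc k) (P (s k))))" for n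
    have "(\<lambda>n. \<Sum>k<n. V (dlt k (s k))) \<longlonglongrightarrow> V s" by (rule bop_lim[OF bop L0 s])
    hence "(\<lambda>n. R (\<Sum>k<n. V (dlt k (s k)))) \<longlonglongrightarrow> R (V s)" by (rule bounded_linear.tendsto[OF bl_R])
    moreover have "R (\<Sum>k<n. V (dlt k (s k))) = l *\<^sub>C B n" for n
      unfolding R_sum B_def scaleC_sum using step l2seqD(1)[OF s] by simp
    ultimately have lim1: "(\<lambda>n. l *\<^sub>C B n) \<longlonglongrightarrow> R (V s)" by simp
    have "(\<lambda>n. \<Sum>k<n. V (dlt k (t k))) \<longlonglongrightarrow> V t" by (rule bop_lim[OF bop L0 t])
    hence "(\<lambda>n. \<Sum>k<Suc n. V (dlt k (t k))) \<longlonglongrightarrow> V t" by (rule LIMSEQ_Suc)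
    moreover have "(\<Sum>k<Suc n. V (dlt k (t k))) = B n" for n
    proof -
      have "(\<Sum>k<Suc n. V (dlt k (t k))) = V (dlt 0 (t 0)) + (\<Sum>k<n. V (dlt (Suc k) (t (Suc k))))"
        by (rule sum.lessThan_Suc_shift)
      moreover have "dlt 0 (t 0) = (\<lambda>k. 0)" by (simp add: t_def tensorS_def dlt_def)
      moreover have "t (Suc k) = P (s k)" for k by (simp add: t_def tensorS_def)
      ultimately show ?thesis using bop_zero[OF bop L0] by (simp add: B_def)
    qed
    ultimately have "B \<longlonglongrightarrow> V t" by simp
    hence "(\<lambda>n. l *\<^sub>C B n) \<longlonglongrightarrow> l *\<^sub>C V t" by (rule tendsto_scaleC)
    with lim1 show ?thesis unfolding t_def using LIMSEQ_unique by blast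
  qed
  show ?thesis unfolding Eint_l2_def using bop comm by blast
qed

lemma part2: "Eint_l2 E L R P l = RHS2"
  using part2_sub part2_sup by blast

end


lemma bound_max:
  assumes "norm a \<le> K * norm x" "norm x \<le> r"
  shows "norm a \<le> max K 0 * r"
proof -
  have "K * norm x \<le> max K 0 * norm x" by (simp add: mult_right_mono)
  also have "\<dots> \<le> max K 0 * r" using assms(2) by (simp add: mult_left_mono)
  finally show ?thesis using assms(1) by simp
qed

context qs begin

lemma Rpow0: "(R ^^ n) 0 = 0"
  using Rpow_scaleC[of n 0 0] by simp

lemma UT0: "UT 0 = (\<lambda>k. 0)"
  using UT_scaleC[of 0 0] subsp_0[OF sH] by (simp add: seq_scale_def)

lemma UT_pow: "h \<in> H \<Longrightarrow> UT ((R ^^ n) h) = ((tensorS P) ^^ n) (UT h)"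
  by (induction n) (simp_all add: UT_intertwines RpowH)

lemma tS_zero: "k < n \<Longrightarrow> ((tensorS P) ^^ n) s k = 0"
proof (induction n arbitrary: k)
  case 0 thus ?case by simp
next
  case (Suc n)
  show ?case
  proof (cases k)
    case 0 thus ?thesis by (simp add: tensorS_def)
  next
    case (Suc j)
    hence "j < n" using Suc.prems by simp
    thus ?thesis using Suc.IH \<open>k = Suc j\<close> by (simp add: tensorS_def P0)
  qed
qed

lemma S_facts:
  obtains S where "\<And>x. x \<in> E \<Longrightarrow> S x \<in> E"
    "\<And>x y. x \<in> E \<Longrightarrow> y \<in> E \<Longrightarrow> cinner (R x) y = cinner x (S y)"
    "\<And>x. x \<in> E \<Longrightarrow> R (S x) = S (R x)"
  using normalE unfolding op_on_def lin_bdd_on_def by blast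

lemma dense_Rpow: "E \<subseteq> closure ((R ^^ n) ` E)"
proof -
  obtain S where SE: "\<And>x. x \<in> E \<Longrightarrow> S x \<in> E"
    and Sadj: "\<And>x y. x \<in> E \<Longrightarrow> y \<in> E \<Longrightarrow> cinner (R x) y = cinner x (S y)"
    and Scomm: "\<And>x. x \<in> E \<Longrightarrow> R (S x) = S (R x)"
    using S_facts by blast
  have SpowE: "x \<in> E \<Longrightarrow> (S ^^ m) x \<in> E" for m x by (induction m) (simp_all add: SE)
  have Spow_adj: "x \<in> E \<Longrightarrow> y \<in> E \<Longrightarrow> cinner ((R ^^ m) x) y = cinner x ((S ^^ m) y)" for m x y
  proof (induction m arbitrary: y)
    case 0 thus ?case by simp
  next
    case (Suc m)
    have "cinner ((R ^^ Suc m) x) y = cinner (R ((R ^^ m) x)) y" by simp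
    also have "\<dots> = cinner ((R ^^ m) x) (S y)" using Sadj RpowE Suc.prems by blast
    also have "\<dots> = cinner x ((S ^^ m) (S y))" using Suc.IH SE Suc.prems by blast
    also have "(S ^^ m) (S y) = (S ^^ Suc m) y" by (simp add: funpow_swap1)
    finally show ?case .
  qed
  have S_inj: "y \<in> E \<Longrightarrow> S y = 0 \<Longrightarrow> y = 0" for y
  proof -
    assume y: "y \<in> E" and Sy: "S y = 0"
    have "cinner (R y) (R y) = cinner y (S (R y))" using Sadj y RE by blast
    also have "S (R y) = R (S y)" using Scomm y by simp
    finally have "cinner (R y) (R y) = 0" using Sy R0 by simp
    hence "R y = 0" by (rule cinner_self_zero)
    thus "y = 0" by (rule inj_R)
  qed
  have Spow_inj: "y \<in> E \<Longrightarrow> (S ^^ m) y = 0 \<Longrightarrow> y = 0" for m y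
  proof (induction m arbitrary: y)
    case 0 thus ?case by simp
  next
    case (Suc m)
    have "(S ^^ m) (S y) = 0" using Suc.prems by (simp add: funpow_swap1)
    hence "S y = 0" using Suc.IH SE Suc.prems by blast
    thus ?case using S_inj Suc.prems by blast
  qed
  show ?thesis
  proof (rule dense_crit[OF csE])
    show "(R ^^ n) ` E \<subseteq> E" using RpowE by blast
    show "subsp ((R ^^ n) ` E)"
      unfolding subsp_def
    proof (intro conjI ballI allI)
      show "0 \<in> (R ^^ n) ` E" using subsp_0[OF sE] Rpow0 by (metis image_eqI)
      fix a b assume "a \<in> (R ^^ n) ` E" "b \<in> (R ^^ n) ` E"
      then obtain x y where "x \<in> E" "y \<in> E" "a = (R ^^ n) x" "b = (R ^^ n) y" by blast
      moreover have "x + y \<in> E" using subsp_add[OF sE \<open>x \<in> E\<close> \<open>y \<in> E\<close>] .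
      ultimately show "a + b \<in> (R ^^ n) ` E" by (metis Rpow_add image_eqI)
    next
      fix c a assume "a \<in> (R ^^ n) ` E"
      then obtain x where "x \<in> E" "a = (R ^^ n) x" by blast
      moreover have "c *\<^sub>C x \<in> E" using subsp_scaleC[OF sE \<open>x \<in> E\<close>] .
      ultimately show "c *\<^sub>C a \<in> (R ^^ n) ` E" by (metis Rpow_scaleC image_eqI)
    qed
    fix k assume k: "k \<in> E" and orth: "\<forall>d\<in>(R ^^ n) ` E. cinner d k = 0"
    have "(S ^^ n) k \<in> E" using SpowE k by blast
    hence "cinner ((R ^^ n) ((S ^^ n) k)) k = 0" using orth by blast
    hence "cinner ((S ^^ n) k) ((S ^^ n) k) = 0" using Spow_adj \<open>(S ^^ n) k \<in> E\<close> k by metis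
    hence "(S ^^ n) k = 0" by (rule cinner_self_zero)
    thus "k = 0" using Spow_inj k by blast
  qed
qed

end


context qs begin

definition UTinv :: "(nat \<Rightarrow> 'a) \<Rightarrow> 'a" where
  "UTinv s = (SOME h. h \<in> H \<and> UT h = s)"

lemma UTinv: "h \<in> H \<Longrightarrow> UT h = s \<Longrightarrow> UTinv s \<in> H \<and> UT (UTinv s) = s"
  unfolding UTinv_def by (rule someI[of "\<lambda>h. h \<in> H \<and> UT h = s"]) simp

lemma UTinv_UT: "h \<in> H \<Longrightarrow> UTinv (UT h) = h"
  using UTinv[of h "UT h"] UT_inj by blast

lemma norm_diff_proj: "norm (x - proj E x) \<le> norm x"
proof -
  have "(norm (x - proj E x))^2 \<le> (norm x)^2" using proj_norm[OF csE, of x] by simp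
  thus ?thesis by (rule power2_le_imp_le) simp
qed

lemma part1_sub:
  assumes X: "X \<in> Eext_on UNIV R l"
  shows "\<exists>U V W. U \<in> Eext_on E R l \<and> V \<in> Eint_l2 E L R P l \<and> W \<in> Eext_on H R l
                  \<and> (\<forall>e\<in>E. \<forall>h\<in>H. X (e + h) = U e + V (UT h) + W h)"
proof -
  have Xl: "lin_bdd_on UNIV UNIV X" and Xc: "\<And>x. R (X x) = l *\<^sub>C X (R x)"
    using X unfolding Eext_on_def op_on_def by auto
  have Xadd: "X (x + y) = X x + X y" for x y using Xl unfolding lin_bdd_on_def by blast
  have XscaleC: "X (c *\<^sub>C x) = c *\<^sub>C X x" for c x using Xl unfolding lin_bdd_on_def by blast
  obtain K where K: "\<And>x. norm (X x) \<le> K * norm x" using Xl unfolding lin_bdd_on_def by blast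
  define Z where "Z x = X x - proj E (X x)" for x
  have ZH: "Z x \<in> H" for x using pE unfolding Z_def by blast
  have Zadd: "Z (x + y) = Z x + Z y" for x y unfolding Z_def by (simp add: Xadd proj_add[OF csE])
  have ZscaleC: "Z (c *\<^sub>C x) = c *\<^sub>C Z x" for c x
    unfolding Z_def by (simp add: XscaleC proj_scaleC[OF csE] scaleC_diff_right)
  have Znorm: "norm (Z x) \<le> K * norm x" for x
    using norm_diff_proj[of "X x"] K[of x] unfolding Z_def by linarith
  have Zc: "R (Z x) = l *\<^sub>C Z (R x)" for x
    unfolding Z_def by (simp add: R_diff pE_R[symmetric] Xc proj_scaleC[OF csE] scaleC_diff_right)
  have Zpow: "(R ^^ n) (Z x) = (l ^ n) *\<^sub>C Z ((R ^^ n) x)" for n x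
  proof (induction n)
    case 0 thus ?case by (simp add: scaleC_one)
  next
    case (Suc n)
    have "(R ^^ Suc n) (Z x) = R ((l ^ n) *\<^sub>C Z ((R ^^ n) x))" using Suc by simp
    also have "\<dots> = (l ^ n) *\<^sub>C (l *\<^sub>C Z (R ((R ^^ n) x)))" by (simp add: R_scaleC Zc)
    also have "\<dots> = (l ^ Suc n) *\<^sub>C Z ((R ^^ Suc n) x)" by (simp add: scaleC_scaleC mult.commute)
    finally show ?case .
  qed
  have Zpow': "Z ((R ^^ n) x) = (inverse l ^ n) *\<^sub>C (R ^^ n) (Z x)" for n x
  proof -
    have "(inverse l ^ n) *\<^sub>C (R ^^ n) (Z x) = (inverse l ^ n * l ^ n) *\<^sub>C Z ((R ^^ n) x)"
      by (simp add: Zpow scaleC_scaleC)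
    also have "inverse l ^ n * l ^ n = 1" using l_nz by (simp add: power_mult_distrib[symmetric])
    finally show ?thesis by (simp add: scaleC_one)
  qed
  have Zvan: "UT (Z ((R ^^ n) e)) k = 0" if "k < n" for n e k
  proof -
    have "UT (Z ((R ^^ n) e)) = seq_scale (inverse l ^ n) (UT ((R ^^ n) (Z e)))"
      unfolding Zpow' by (rule UT_scaleC[OF RpowH[OF ZH]])
    also have "UT ((R ^^ n) (Z e)) = ((tensorS P) ^^ n) (UT (Z e))" by (rule UT_pow[OF ZH])
    finally show ?thesis using tS_zero[OF that] by (simp add: seq_scale_def)
  qed
  have ZE: "Z e = 0" if e: "e \<in> E" for e
  proof -
    have "UT (Z e) k = 0" for k
    proof (rule agree_dense[OF dense_Rpow[of "Suc k"] _ sE _ _ _ e])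
      show "(R ^^ Suc k) ` E \<subseteq> E" using RpowE by blast
      show "UT (Z (x + y)) k = UT (Z x) k + UT (Z y) k" for x y
        using UT_add[OF ZH ZH] Zadd by (simp add: seq_add_def)
      show "norm (UT (Z x) k) \<le> K * norm x" for x
        using UT_comp_bound[OF ZH, of x k] Znorm[of x] by linarith
      show "UT (Z d) k = 0" if dD: "d \<in> (R ^^ Suc k) ` E" for d
      proof -
        obtain e' where "d = (R ^^ Suc k) e'" using dD by blast
        thus ?thesis using Zvan[of k "Suc k" e'] by simp
      qed
    qed
    hence "UT (Z e) = UT 0" using UT0 by auto
    thus ?thesis using UT_inj[OF ZH subsp_0[OF sH]] by blast
  qed
  define U where "U x = proj E (X x)" for x
  define V where "V s = proj E (X (UTinv s))" for s
  have XE: "X e = U e" if "e \<in> E" for e using ZE[OF that] unfolding Z_def U_def by simp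
  have U_in: "U \<in> Eext_on E R l"
    unfolding Eext_on_def op_on_def lin_bdd_on_def
  proof (intro CollectI conjI ballI allI)
    show "U x \<in> E" for x unfolding U_def by (rule pE)
    show "U (x + y) = U x + U y" for x y unfolding U_def by (simp add: Xadd proj_add[OF csE])
    show "U (c *\<^sub>C x) = c *\<^sub>C U x" for c x unfolding U_def by (simp add: XscaleC proj_scaleC[OF csE])
    show "\<exists>K. \<forall>x\<in>E. norm (U x) \<le> K * norm x"
      using K proj_norm_le[OF csE] unfolding U_def by (meson order_trans)
    show "R (U x) = l *\<^sub>C U (R x)" for x unfolding U_def by (simp add: pE_R[symmetric] Xc proj_scaleC[OF csE])
  qed
  have W_in: "Z \<in> Eext_on H R l"
    unfolding Eext_on_def op_on_def lin_bdd_on_def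
  proof (intro CollectI conjI ballI allI)
    show "Z x \<in> H" for x by (rule ZH)
    show "Z (x + y) = Z x + Z y" for x y by (rule Zadd)
    show "Z (c *\<^sub>C x) = c *\<^sub>C Z x" for c x by (rule ZscaleC)
    show "\<exists>K. \<forall>x\<in>H. norm (Z x) \<le> K * norm x" using Znorm by blast
    show "R (Z x) = l *\<^sub>C Z (R x)" for x by (rule Zc)
  qed
  have UTinv_l2: "s \<in> l2seq L \<Longrightarrow> UTinv s \<in> H \<and> UT (UTinv s) = s" for s
    using UT_surj UTinv by blast
  have V_in: "V \<in> Eint_l2 E L R P l"
    unfolding Eint_l2_def bop_l2_def
  proof (intro CollectI conjI ballI allI)
    show "V s \<in> E" for s unfolding V_def by (rule pE)
    fix s t assume s: "s \<in> l2seq L" and t: "t \<in> l2seq L"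
    have hs: "UTinv s \<in> H" "UT (UTinv s) = s" using UTinv_l2[OF s] by auto
    have ht: "UTinv t \<in> H" "UT (UTinv t) = t" using UTinv_l2[OF t] by auto
    have "UT (UTinv s + UTinv t) = seq_add s t" using UT_add[OF hs(1) ht(1)] hs ht by simp
    hence "UTinv (seq_add s t) = UTinv s + UTinv t"
      using UTinv_UT[OF subsp_add[OF sH hs(1) ht(1)]] by simp
    thus "V (seq_add s t) = V s + V t" unfolding V_def by (simp add: Xadd proj_add[OF csE])
  next
    fix c s assume s: "s \<in> l2seq L"
    have hs: "UTinv s \<in> H" "UT (UTinv s) = s" using UTinv_l2[OF s] by auto
    have "UT (c *\<^sub>C UTinv s) = seq_scale c s" using UT_scaleC[OF hs(1)] hs by simp
    hence "UTinv (seq_scale c s) = c *\<^sub>C UTinv s"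
      using UTinv_UT[OF subsp_scaleC[OF sH hs(1)], of c] by simp
    thus "V (seq_scale c s) = c *\<^sub>C V s" unfolding V_def by (simp add: XscaleC proj_scaleC[OF csE])
  next
    show "\<exists>K. \<forall>s\<in>l2seq L. norm (V s) \<le> K * l2norm s"
    proof (intro exI ballI)
      fix s assume s: "s \<in> l2seq L"
      have hs: "UTinv s \<in> H" "UT (UTinv s) = s" using UTinv_l2[OF s] by auto
      have "norm (V s) \<le> norm (X (UTinv s))" unfolding V_def by (rule proj_norm_le[OF csE])
      also have "\<dots> \<le> K * norm (UTinv s)" by (rule K)
      also have "norm (UTinv s) = l2norm s" using UT_iso[OF hs(1)] hs(2) by simp
      finally show "norm (V s) \<le> K * l2norm s" .
    qed
  next
    fix s assume s: "s \<in> l2seq L"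
    have hs: "UTinv s \<in> H" "UT (UTinv s) = s" using UTinv_l2[OF s] by auto
    have "UT (R (UTinv s)) = tensorS P s" using UT_intertwines hs by simp
    hence "UTinv (tensorS P s) = R (UTinv s)" using UTinv_UT[OF RH[OF hs(1)]] by simp
    thus "R (V s) = l *\<^sub>C V (tensorS P s)"
      unfolding V_def by (simp add: pE_R[symmetric] Xc proj_scaleC[OF csE])
  qed
  have dec: "\<forall>e\<in>E. \<forall>h\<in>H. X (e + h) = U e + V (UT h) + Z h"
  proof (intro ballI)
    fix e h assume e: "e \<in> E" and h: "h \<in> H"
    have "X (e + h) = X e + X h" by (rule Xadd)
    also have "X h = proj E (X h) + Z h" unfolding Z_def by simp
    also have "proj E (X h) = V (UT h)" unfolding V_def using UTinv_UT[OF h] by simp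
    finally show "X (e + h) = U e + V (UT h) + Z h" using XE[OF e] by (simp add: add.assoc)
  qed
  show ?thesis using U_in V_in W_in dec by blast
qed

end


context qs begin

lemma part1_sup:
  assumes U: "U \<in> Eext_on E R l" and V: "V \<in> Eint_l2 E L R P l" and W: "W \<in> Eext_on H R l"
    and dec: "\<forall>e\<in>E. \<forall>h\<in>H. X (e + h) = U e + V (UT h) + W h"
  shows "X \<in> Eext_on UNIV R l"
proof -
  define q where "q x = x - proj E x" for x
  have qH: "q x \<in> H" for x unfolding q_def by (rule pE)
  have Xf: "X x = U (proj E x) + V (UT (q x)) + W (q x)" for x
    using dec pE(1)[of x] qH[of x] unfolding q_def by (metis add_diff_cancel_left' add.commute diff_add_cancel)
  have Ul: "lin_bdd_on E E U" and Uc: "\<And>x. x \<in> E \<Longrightarrow> R (U x) = l *\<^sub>C U (R x)"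
    using U unfolding Eext_on_def op_on_def by auto
  have Wl: "lin_bdd_on H H W" and Wc: "\<And>x. x \<in> H \<Longrightarrow> R (W x) = l *\<^sub>C W (R x)"
    using W unfolding Eext_on_def op_on_def by auto
  have Vb: "bop_l2 L E V" and Vc: "\<And>s. s \<in> l2seq L \<Longrightarrow> R (V s) = l *\<^sub>C V (tensorS P s)"
    using V unfolding Eint_l2_def by auto
  have qadd: "q (x + y) = q x + q y" for x y unfolding q_def by (simp add: proj_add[OF csE])
  have qscale: "q (c *\<^sub>C x) = c *\<^sub>C q x" for c x unfolding q_def by (simp add: proj_scaleC[OF csE] scaleC_diff_right)
  have qR: "q (R x) = R (q x)" for x unfolding q_def by (simp add: pE_R R_diff)
  have Xadd: "X (x + y) = X x + X y" for x y
  proof -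
    have "U (proj E (x + y)) = U (proj E x) + U (proj E y)"
      using Ul pE(1) unfolding lin_bdd_on_def proj_add[OF csE] by blast
    moreover have "V (UT (q (x + y))) = V (UT (q x)) + V (UT (q y))"
      using Vb UT_add[OF qH qH] UT_l2[OF qH] unfolding bop_l2_def qadd by metis
    moreover have "W (q (x + y)) = W (q x) + W (q y)"
      using Wl qH unfolding lin_bdd_on_def qadd by blast
    ultimately show ?thesis unfolding Xf by (simp add: algebra_simps)
  qed
  have Xscale: "X (c *\<^sub>C x) = c *\<^sub>C X x" for c x
  proof -
    have "U (proj E (c *\<^sub>C x)) = c *\<^sub>C U (proj E x)"
      using Ul pE(1) unfolding lin_bdd_on_def proj_scaleC[OF csE] by blast
    moreover have "V (UT (q (c *\<^sub>C x))) = c *\<^sub>C V (UT (q x))"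
      using Vb UT_scaleC[OF qH] UT_l2[OF qH] unfolding bop_l2_def qscale by metis
    moreover have "W (q (c *\<^sub>C x)) = c *\<^sub>C W (q x)"
      using Wl qH unfolding lin_bdd_on_def qscale by blast
    ultimately show ?thesis unfolding Xf by (simp add: scaleC_add_right)
  qed
  obtain KU where KU: "\<And>x. x \<in> E \<Longrightarrow> norm (U x) \<le> KU * norm x" using Ul unfolding lin_bdd_on_def by blast
  obtain KW where KW: "\<And>x. x \<in> H \<Longrightarrow> norm (W x) \<le> KW * norm x" using Wl unfolding lin_bdd_on_def by blast
  obtain KV where KV: "\<And>s. s \<in> l2seq L \<Longrightarrow> norm (V s) \<le> KV * l2norm s" using Vb unfolding bop_l2_def by blast
  have Xb: "norm (X x) \<le> (max KU 0 + max KV 0 + max KW 0) * norm x" for x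
  proof -
    have a: "norm (U (proj E x)) \<le> max KU 0 * norm x"
      by (rule bound_max[OF KU[OF pE(1)] proj_norm_le[OF csE]])
    have b: "norm (V (UT (q x))) \<le> max KV 0 * norm x"
    proof (rule bound_max[where x="q x"])
      show "norm (V (UT (q x))) \<le> KV * norm (q x)" using KV[OF UT_l2[OF qH]] UT_iso[OF qH] by simp
      show "norm (q x) \<le> norm x" unfolding q_def by (rule norm_diff_proj)
    qed
    have c: "norm (W (q x)) \<le> max KW 0 * norm x"
      by (rule bound_max[OF KW[OF qH]]) (unfold q_def, rule norm_diff_proj)
    have "norm (X x) \<le> norm (U (proj E x)) + norm (V (UT (q x))) + norm (W (q x))"
      unfolding Xf by (meson norm_triangle_ineq add_mono order_trans order_refl)
    thus ?thesis using a b c by (simp add: algebra_simps)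
  qed
  have Xc: "R (X x) = l *\<^sub>C X (R x)" for x
  proof -
    have "R (X x) = R (U (proj E x)) + R (V (UT (q x))) + R (W (q x))" unfolding Xf by (simp add: R_add)
    also have "\<dots> = l *\<^sub>C U (R (proj E x)) + l *\<^sub>C V (tensorS P (UT (q x))) + l *\<^sub>C W (R (q x))"
      using Uc[OF pE(1)] Vc[OF UT_l2[OF qH]] Wc[OF qH] by simp
    also have "tensorS P (UT (q x)) = UT (R (q x))" using UT_intertwines qH by simp
    also have "l *\<^sub>C U (R (proj E x)) + l *\<^sub>C V (UT (R (q x))) + l *\<^sub>C W (R (q x)) = l *\<^sub>C X (R x)"
      unfolding Xf[of "R x"] by (simp add: pE_R qR scaleC_add_right)
    finally show ?thesis .
  qed
  show ?thesis
    unfolding Eext_on_def op_on_def lin_bdd_on_def using Xadd Xscale Xb Xc by blast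
qed

lemma part1:
  "Eext_on UNIV R l =
           {X. \<exists>U V W. U \<in> Eext_on E R l \<and> V \<in> Eint_l2 E L R P l \<and> W \<in> Eext_on H R l
                  \<and> (\<forall>e\<in>E. \<forall>h\<in>H. X (e + h) = U e + V (UT h) + W h)}"
  using part1_sub part1_sup by blast

end

theorem theorem4p6:
  fixes R :: "'a::chilbert_space \<Rightarrow> 'a"
    and E H L :: "'a set"
    and P VT :: "'a \<Rightarrow> 'a"
    and UT :: "'a \<Rightarrow> nat \<Rightarrow> 'a"
    and l :: complex
  assumes quasinormal: "quasinormal_on UNIV R"
    and injective: "inj R"
    and canonical: "canonical_decomp R E H"
    and modulus: "modulus_on H R P"
    and polar: "polar_part_on H R P VT"
    and L_def: "L = H \<inter> orth_compl (VT ` H)"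
    and UT_unitary: "unitary_l2 H L UT"
    and UT_intertwines: "\<forall>h\<in>H. UT (R h) = tensorS P (UT h)"
    and l_in: "l \<in> sigma_ext R"
  shows "Eext_on UNIV R l =
           {X. \<exists>U V W. U \<in> Eext_on E R l \<and> V \<in> Eint_l2 E L R P l \<and> W \<in> Eext_on H R l
                  \<and> (\<forall>e\<in>E. \<forall>h\<in>H. X (e + h) = U e + V (UT h) + W h)}
       \<and> Eint_l2 E L R P l =
           {V. bop_l2 L E V
               \<and> row_entry V 0 \<in> A_class (cmod l) L E R P
               \<and> (\<forall>n\<ge>1.
                    (\<forall>x\<in>L. row_entry V n ((P ^^ n) x) = (inverse l ^ n) *\<^sub>C (R ^^ n) (row_entry V 0 x))
                  \<and> (\<forall>Y. lin_bdd_on L E Y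
                        \<and> (\<forall>x\<in>L. Y ((P ^^ n) x) = (inverse l ^ n) *\<^sub>C (R ^^ n) (row_entry V 0 x))
                        \<longrightarrow> (\<forall>y\<in>L. Y y = row_entry V n y)))}"
proof -
  interpret qs R E H L P VT UT l
    using assms by unfold_locales
  show ?thesis using part1 part2 unfolding RHS2_def by blast
qed


end
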